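(* Let $A,B\in\mathbb{R}_+^{m\times n}$ be a WN-pair, and let $\mathcal{M}(B)$ be the set of all $K\subseteq[n]$ with $|K|=m$ such that $B[[m],K]$ is a monomial matrix. Then $$\rho(A,B)=\min\{\rho(B[[m],K]^{-1}A[[m],K]):K\in\mathcal{M}(B)\}.$$ For each $K\in\mathcal{M}(B)$ attaining this minimum there exists an optimal $\mathbf{y}\in\Pi_n$ with $\operatorname{supp}\mathbf{y}\subseteq K$ that is a GPF-eigenvector, i.e. $A\mathbf{y}=\rho(A,B)B\mathbf{y}$. If moreover the WN-pair is $S$-irreducible, then each such $\mathbf{y}$ is minimal optimal.
   Context: $[m]=\{1,\dots,m\}$; $\Pi_n$ is the set of probability vectors in $\mathbb{R}^n$; $\rho(C)$ is the spectral radius of a square matrix $C$. For $F\in\mathbb{R}^{m\times n}$ and $K\subseteq[n]$, $F[[m],K]$ is the submatrix formed by the columns in $K$. For $A,B\in\mathbb{R}_+^{m\times n}$ and $\mathbf{x}\in\mathbb{R}^n_+\setminus\{\mathbf{0}\}$, $r(A,B,\mathbf{x})=\max_{i\in[m]}\frac{(A\mathbf{x})_i}{(B\mathbf{x})_i}\in[0,\infty]$ (conventions $\frac00=0$, $\frac c0=\infty$ for $c>0$), and $\rho(A,B)=\inf\{r(A,B,\mathbf{x}):\mathbf{x}>\mathbf{0}\}$. A vector $\mathbf{y}\in\mathbb{R}^n_+\setminus\{\mathbf{0}\}$ is optimal if $r(A,B,\mathbf{y})=\rho(A,B)$ and there is a sequence $\mathbf{y}_k>\mathbf{0}$ with $\mathbf{y}_k\to\mathbf{y}$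 and $r(A,B,\mathbf{y}_k)\to\rho(A,B)$; minimal optimal if moreover no optimal vector has support strictly contained in $\operatorname{supp}\mathbf{y}$; a GPF-eigenvector if $A\mathbf{y}=\rho(A,B)B\mathbf{y}$. A pair $A,B\in\mathbb{R}_+^{m\times n}$ is a WN-pair if $n\ge m$, $B$ has no zero row, and each column of $B$ has exactly one positive entry. A square nonnegative matrix is monomial if each row and each column has exactly one positive entry; it is irreducible if the digraph with an edge $i\to j$ iff the $(i,j)$ entry is positive is strongly connected. A WN-pair is $S$-irreducible if for every $K\in\mathcal M(B)$ the matrix $B[[m],K]^{-1}A[[m],K]$ is irreducible. *)

theory Defs
  imports Complex_Main "HOL-Library.Extended_Real"
    "Jordan_Normal_Form.Spectral_Radius" "Jordan_Normal_Form.DL_Submatrix"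
    "Jordan_Normal_Form.Gauss_Jordan_Elimination"
begin

text \<open>Matrices are JNF matrices; A, B are m x n real matrices, vectors have dimension n.
  Indices are 0-based: [m] is rendered as {..<m}.\<close>

definition nonneg_mat :: "real mat \<Rightarrow> bool" where
  "nonneg_mat C \<longleftrightarrow> (\<forall>i<dim_row C. \<forall>j<dim_col C. C $$ (i,j) \<ge> 0)"

definition nonneg_vec :: "real vec \<Rightarrow> bool" where
  "nonneg_vec x \<longleftrightarrow> (\<forall>i<dim_vec x. x $ i \<ge> 0)"

definition pos_vec :: "real vec \<Rightarrow> bool" where
  "pos_vec x \<longleftrightarrow> (\<forall>i<dim_vec x. x $ i > 0)"

definition supp_vec :: "real vec \<Rightarrow> nat set" where
  "supp_vec x = {i. i < dim_vec x \<and> x $ i \<noteq> 0}"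

definition prob_vec :: "nat \<Rightarrow> real vec \<Rightarrow> bool" where
  "prob_vec n y \<longleftrightarrow> dim_vec y = n \<and> nonneg_vec y \<and> (\<Sum>i<n. y $ i) = 1"

definition ratio_e :: "real \<Rightarrow> real \<Rightarrow> ereal" where
  "ratio_e a b = (if b = 0 then (if a = 0 then 0 else \<infinity>) else ereal (a / b))"

definition r_AB :: "real mat \<Rightarrow> real mat \<Rightarrow> real vec \<Rightarrow> ereal" where
  "r_AB A B x = (SUP i\<in>{..<dim_row A}. ratio_e ((A *\<^sub>v x) $ i) ((B *\<^sub>v x) $ i))"

definition rho_AB :: "real mat \<Rightarrow> real mat \<Rightarrow> ereal" where
  "rho_AB A B = (INF x\<in>{x. dim_vec x = dim_col A \<and> pos_vec x}. r_AB A B x)"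

definition optimal :: "real mat \<Rightarrow> real mat \<Rightarrow> real vec \<Rightarrow> bool" where
  "optimal A B y \<longleftrightarrow> dim_vec y = dim_col A \<and> nonneg_vec y \<and> y \<noteq> 0\<^sub>v (dim_col A) \<and>
     r_AB A B y = rho_AB A B \<and>
     (\<exists>Y :: nat \<Rightarrow> real vec. (\<forall>k. dim_vec (Y k) = dim_col A \<and> pos_vec (Y k)) \<and>
        (\<forall>i<dim_col A. (\<lambda>k. Y k $ i) \<longlonglongrightarrow> y $ i) \<and>
        (\<lambda>k. r_AB A B (Y k)) \<longlonglongrightarrow> rho_AB A B)"

definition minimal_optimal :: "real mat \<Rightarrow> real mat \<Rightarrow> real vec \<Rightarrow> bool" where
  "minimal_optimal A B y \<longleftrightarrow> optimal A B y \<and>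
     \<not> (\<exists>z. optimal A B z \<and> supp_vec z \<subset> supp_vec y)"

definition GPF_eigenvector :: "real mat \<Rightarrow> real mat \<Rightarrow> real vec \<Rightarrow> bool" where
  "GPF_eigenvector A B y \<longleftrightarrow> dim_vec y = dim_col A \<and> nonneg_vec y \<and> y \<noteq> 0\<^sub>v (dim_col A) \<and>
     (\<exists>c. rho_AB A B = ereal c \<and> A *\<^sub>v y = c \<cdot>\<^sub>v (B *\<^sub>v y))"

definition monomial_mat :: "real mat \<Rightarrow> bool" where
  "monomial_mat C \<longleftrightarrow> dim_row C = dim_col C \<and> nonneg_mat C \<and>
     (\<forall>i<dim_row C. \<exists>!j. j < dim_col C \<and> C $$ (i,j) > 0) \<and>
     (\<forall>j<dim_col C. \<exists>!i. i < dim_row C \<and> C $$ (i,j) > 0)"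

definition irreducible_mat :: "real mat \<Rightarrow> bool" where
  "irreducible_mat C \<longleftrightarrow> dim_row C = dim_col C \<and>
     (\<forall>i<dim_row C. \<forall>j<dim_row C.
        (i, j) \<in> {(a, b). a < dim_row C \<and> b < dim_row C \<and> C $$ (a, b) > 0}\<^sup>*)"

definition WN_pair :: "nat \<Rightarrow> nat \<Rightarrow> real mat \<Rightarrow> real mat \<Rightarrow> bool" where
  "WN_pair m n A B \<longleftrightarrow> A \<in> carrier_mat m n \<and> B \<in> carrier_mat m n \<and>
     nonneg_mat A \<and> nonneg_mat B \<and> n \<ge> m \<and>
     (\<forall>i<m. \<exists>j<n. B $$ (i,j) \<noteq> 0) \<and>
     (\<forall>j<n. \<exists>!i. i < m \<and> B $$ (i,j) > 0)"

text \<open>F[[m],K]: the submatrix with all rows and the columns in K (in increasing order).\<close>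
definition cols_sub :: "real mat \<Rightarrow> nat set \<Rightarrow> real mat" where
  "cols_sub F K = submatrix F {..<dim_row F} K"

definition M_set :: "real mat \<Rightarrow> nat set set" where
  "M_set B = {K. K \<subseteq> {..<dim_col B} \<and> card K = dim_row B \<and> monomial_mat (cols_sub B K)}"

definition C_K :: "real mat \<Rightarrow> real mat \<Rightarrow> nat set \<Rightarrow> real mat" where
  "C_K A B K = the (mat_inverse (cols_sub B K)) * cols_sub A K"

definition spec_rad :: "real mat \<Rightarrow> real" where
  "spec_rad C = spectral_radius (map_mat complex_of_real C)"

definition S_irreducible :: "real mat \<Rightarrow> real mat \<Rightarrow> bool" where
  "S_irreducible A B \<longleftrightarrow> (\<forall>K\<in>M_set B. irreducible_mat (C_K A B K))"

end

theory Submission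
  imports Defs
begin


lemma mv_index:
  assumes "A \<in> carrier_mat r c" "dim_vec v = c" "i < r"
  shows "(A *\<^sub>v v) $ i = (\<Sum>j<c. A $$ (i,j) * v $ j)"
  using assms by (auto simp: scalar_prod_def lessThan_atLeast0 intro!: sum.cong)

lemma spec_rad_attained:
  assumes C: "C \<in> carrier_mat d d" and d: "0 < d"
  shows "\<exists>\<mu> w. w \<in> carrier_vec d \<and> w \<noteq> 0\<^sub>v d \<and>
     map_mat complex_of_real C *\<^sub>v w = \<mu> \<cdot>\<^sub>v w \<and> cmod \<mu> = spec_rad C"
proof -
  let ?C = "map_mat complex_of_real C"
  have C': "?C \<in> carrier_mat d d" using C by auto
  from spectral_radius_mem_max(1)[OF C' d] obtain \<mu> where
    mu: "\<mu> \<in> spectrum ?C" "spectral_radius ?C = norm \<mu>" by auto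
  then obtain w where "eigenvector ?C w \<mu>" unfolding spectrum_def eigenvalue_def by auto
  thus ?thesis using C' mu unfolding eigenvector_def spec_rad_def by auto
qed

lemma spec_rad_nonneg:
  assumes C: "C \<in> carrier_mat d d" and d: "0 < d"
  shows "spec_rad C \<ge> 0"
  using spec_rad_attained[OF assms] norm_ge_zero by metis

lemma spec_rad_transpose:
  assumes C: "C \<in> carrier_mat d d"
  shows "spec_rad (transpose_mat C) = spec_rad C"
proof -
  let ?C = "map_mat complex_of_real C"
  have C': "?C \<in> carrier_mat d d" using C by auto
  have "map_mat complex_of_real (transpose_mat C) = transpose_mat ?C"
    by (simp add: map_mat_transpose)
  moreover have "spectrum (transpose_mat ?C) = spectrum ?C"
    using spectrum_root_char_poly[OF C'] spectrum_root_char_poly[of "transpose_mat ?C" d] C'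
    by auto
  ultimately show ?thesis unfolding spec_rad_def spectral_radius_def by simp
qed




lemma cw_upper:
  assumes C: "C \<in> carrier_mat d d" and d: "0<d"
    and nn: "\<forall>i<d. \<forall>j<d. C$$(i,j) \<ge> 0"
    and z: "z \<in> carrier_vec d" "\<forall>i<d. z$i > 0"
    and le: "\<forall>i<d. (C *\<^sub>v z)$i \<le> t * z$i"
  shows "spec_rad C \<le> t"
proof -
  obtain \<mu> w where w: "w \<in> carrier_vec d" "w \<noteq> 0\<^sub>v d"
    and ev: "map_mat complex_of_real C *\<^sub>v w = \<mu> \<cdot>\<^sub>v w" and mu: "cmod \<mu> = spec_rad C"
    using spec_rad_attained[OF C d] by blast
  define f where "f i = cmod (w$i) / z$i" for i
  define s where "s = Max (f ` {..<d})"
  have fin: "finite (f ` {..<d})" "f ` {..<d} \<noteq> {}" using d by auto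
  obtain i0 where i0: "i0 < d" "f i0 = s" using Max_in[OF fin] unfolding s_def by auto
  have fle: "f j \<le> s" if "j<d" for j unfolding s_def using Max_ge[OF fin(1)] that by auto
  have wle: "cmod (w$j) \<le> s * z$j" if "j<d" for j
    using fle[OF that] z that unfolding f_def by (auto simp: field_simps)
  have wi0: "cmod (w$i0) = s * z$i0" using i0 z unfolding f_def by auto
  obtain j where j: "j<d" "w$j \<noteq> 0" using w by (metis carrier_vecD eq_vecI index_zero_vec(1,2))
  have "f j > 0" using j z unfolding f_def by auto
  hence spos: "s > 0" using fle[OF j(1)] by auto
  have "cmod \<mu> * cmod (w$i0) = cmod ((\<mu> \<cdot>\<^sub>v w)$i0)" using w i0 by (auto simp: norm_mult)
  also have "\<dots> = cmod ((map_mat complex_of_real C *\<^sub>v w)$i0)" using ev by simp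
  also have "\<dots> = cmod (\<Sum>j<d. complex_of_real (C$$(i0,j)) * w$j)"
    using mv_index[of "map_mat complex_of_real C" d d w i0] C w i0 by auto
  also have "\<dots> \<le> (\<Sum>j<d. cmod (complex_of_real (C$$(i0,j)) * w$j))" by (rule norm_sum)
  also have "\<dots> = (\<Sum>j<d. C$$(i0,j) * cmod (w$j))"
    using nn i0 by (auto simp: norm_mult intro!: sum.cong)
  also have "\<dots> \<le> (\<Sum>j<d. C$$(i0,j) * (s * z$j))"
    using nn i0 wle by (auto intro!: sum_mono mult_left_mono)
  also have "\<dots> = s * (C *\<^sub>v z)$i0"
    using mv_index[of C d d z i0] C z i0 by (auto simp: sum_distrib_left ac_simps)
  also have "\<dots> \<le> s * (t * z$i0)" using le i0 spos by auto
  finally have "cmod \<mu> * (s * z$i0) \<le> t * (s * z$i0)" unfolding wi0 by (simp add: ac_simps)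
  moreover have "s * z$i0 > 0" using spos z i0 by auto
  ultimately show ?thesis using mu by (metis mult_le_cancel_right_pos)
qed

lemma smult_pow_mat:
  fixes A :: "'a::comm_ring_1 mat"
  assumes "A \<in> carrier_mat n n"
  shows "(a \<cdot>\<^sub>m A) ^\<^sub>m k = (a^k) \<cdot>\<^sub>m (A ^\<^sub>m k)"
proof (induction k)
  case 0 then show ?case using assms by (auto intro!: eq_matI)
next
  case (Suc k)
  have "(a \<cdot>\<^sub>m A) ^\<^sub>m Suc k = ((a^k) \<cdot>\<^sub>m (A ^\<^sub>m k)) * (a \<cdot>\<^sub>m A)" using Suc by simp
  also have "\<dots> = (a^k) \<cdot>\<^sub>m ((A ^\<^sub>m k) * (a \<cdot>\<^sub>m A))"
    using assms mult_smult_assoc_mat[OF pow_carrier_mat[OF assms] smult_carrier_mat[OF assms]] by simp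
  also have "(A ^\<^sub>m k) * (a \<cdot>\<^sub>m A) = a \<cdot>\<^sub>m (A ^\<^sub>m k * A)"
    using mult_smult_distrib[OF pow_carrier_mat[OF assms] assms] by simp
  also have "(a^k) \<cdot>\<^sub>m (a \<cdot>\<^sub>m (A ^\<^sub>m k * A)) = (a^k * a) \<cdot>\<^sub>m (A ^\<^sub>m k * A)"
    by (rule eq_matI) (simp_all add: mult.assoc)
  finally show ?case by (simp add: ac_simps)
qed

lemma pow_bound:
  assumes C: "C \<in> carrier_mat d d" and d: "0<d" and tau: "spec_rad C < \<tau>"
  shows "\<exists>b. \<forall>k i j. i<d \<longrightarrow> j<d \<longrightarrow> \<bar>(C ^\<^sub>m k) $$ (i,j)\<bar> \<le> b * \<tau>^k"
proof -
  let ?C = "map_mat complex_of_real C"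
  have C': "?C \<in> carrier_mat d d" using C by auto
  have tpos: "\<tau> > 0" using spec_rad_nonneg[OF C d] tau by auto
  define M where "M = complex_of_real (1/\<tau>) \<cdot>\<^sub>m ?C"
  have M: "M \<in> carrier_mat d d" using C' unfolding M_def by auto
  from spectral_radius_mem_max(1)[OF M d] obtain \<nu> where
    nu: "\<nu> \<in> spectrum M" "spectral_radius M = norm \<nu>" by auto
  then obtain w where "eigenvector M w \<nu>" unfolding spectrum_def eigenvalue_def by auto
  hence w: "w \<in> carrier_vec d" "w \<noteq> 0\<^sub>v d" "M *\<^sub>v w = \<nu> \<cdot>\<^sub>v w"
    unfolding eigenvector_def using M by auto
  have "?C *\<^sub>v w = complex_of_real \<tau> \<cdot>\<^sub>v (M *\<^sub>v w)"
  proof (rule eq_vecI)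
    fix i assume i: "i < dim_vec (complex_of_real \<tau> \<cdot>\<^sub>v (M *\<^sub>v w))"
    hence i: "i < d" using M by simp
    have "(M *\<^sub>v w) $ i = (\<Sum>j<d. M $$ (i,j) * w $ j)" using mv_index[OF M _ i] w(1) by simp
    also have "\<dots> = (\<Sum>j<d. complex_of_real (1/\<tau>) * (?C $$ (i,j) * w $ j))"
      using C' i unfolding M_def by (intro sum.cong) (simp_all add: mult.assoc)
    also have "\<dots> = complex_of_real (1/\<tau>) * (?C *\<^sub>v w) $ i"
      using mv_index[OF C' _ i] w(1) by (simp add: sum_distrib_left)
    finally show "(?C *\<^sub>v w) $ i = (complex_of_real \<tau> \<cdot>\<^sub>v (M *\<^sub>v w)) $ i"
      using i M tpos by simp
  qed (use M C' in simp)
  hence "?C *\<^sub>v w = (complex_of_real \<tau> * \<nu>) \<cdot>\<^sub>v w" using w by (simp add: smult_smult_assoc)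
  hence "eigenvector ?C w (complex_of_real \<tau> * \<nu>)" unfolding eigenvector_def using w C' by auto
  hence "norm (complex_of_real \<tau> * \<nu>) \<in> norm ` spectrum ?C"
    unfolding spectrum_def eigenvalue_def by auto
  from spectral_radius_mem_max(2)[OF C' d this]
  have "\<tau> * cmod \<nu> \<le> spec_rad C" unfolding spec_rad_def using tpos by (simp add: norm_mult)
  hence "cmod \<nu> < 1" using tau tpos
    by (smt (verit, ccfv_SIG) mult_less_cancel_left2)
  hence "spectral_radius M < 1" using nu by simp
  from spectral_radius_jnf_norm_bound_less_1_upper_triangular[OF M this]
  obtain c where c: "\<And>k. norm_bound (M ^\<^sub>m k) c" by auto
  show ?thesis
  proof (intro exI allI impI)
    fix k i j assume ij: "i<d" "j<d"
    have "M ^\<^sub>m k = complex_of_real (1/\<tau>)^k \<cdot>\<^sub>m (?C ^\<^sub>m k)"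
      unfolding M_def by (rule smult_pow_mat[OF C'])
    also have "?C ^\<^sub>m k = map_mat complex_of_real (C ^\<^sub>m k)"
      by (rule of_real_hom.mat_hom_pow[OF C, symmetric])
    finally have "(M ^\<^sub>m k) $$ (i,j) = complex_of_real ((1/\<tau>)^k * (C ^\<^sub>m k) $$ (i,j))"
      using ij C by simp
    moreover have "norm ((M ^\<^sub>m k) $$ (i,j)) \<le> c" using c[of k] ij M unfolding norm_bound_def by auto
    ultimately have "\<bar>(1/\<tau>)^k * (C ^\<^sub>m k) $$ (i,j)\<bar> \<le> c" using tpos by (simp add: norm_mult norm_power norm_divide abs_mult power_abs)
    hence "\<bar>(C ^\<^sub>m k) $$ (i,j)\<bar> / \<tau>^k \<le> c" using tpos by (simp add: abs_mult power_one_over)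
    thus "\<bar>(C ^\<^sub>m k) $$ (i,j)\<bar> \<le> c * \<tau>^k" using tpos by (simp add: field_simps)
  qed
qed




definition ones :: "nat \<Rightarrow> real vec" where "ones d = vec d (\<lambda>_. 1)"

lemma mm_index:
  assumes "A \<in> carrier_mat r c" "B \<in> carrier_mat c e" "i < r" "j < e"
  shows "(A * B) $$ (i,j) = (\<Sum>l<c. A $$ (i,l) * B $$ (l,j))"
  using assms by (auto simp: scalar_prod_def lessThan_atLeast0 intro!: sum.cong)

lemma pow_comm:
  fixes C :: "'a::comm_ring_1 mat"
  assumes C: "C \<in> carrier_mat d d" shows "C ^\<^sub>m k * C = C * C ^\<^sub>m k"
proof (induction k)
  case 0 thus ?case using C by simp
next
  case (Suc k)
  have "C ^\<^sub>m Suc k * C = (C ^\<^sub>m k * C) * C" by simp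
  also have "\<dots> = (C * C ^\<^sub>m k) * C" using Suc by simp
  also have "\<dots> = C * (C ^\<^sub>m k * C)"
    using C by (intro assoc_mult_mat[of _ d d _ d _ d]) auto
  finally show ?case by simp
qed

lemma pow_suc_vec:
  fixes C :: "'a::comm_ring_1 mat"
  assumes C: "C \<in> carrier_mat d d" and v: "v \<in> carrier_vec d"
  shows "(C ^\<^sub>m Suc k) *\<^sub>v v = C *\<^sub>v ((C ^\<^sub>m k) *\<^sub>v v)"
proof -
  have "C ^\<^sub>m Suc k = C * C ^\<^sub>m k" using pow_comm[OF C] by simp
  thus ?thesis using C v by (simp add: assoc_mult_mat_vec[of _ d d _ d])
qed

lemma pow_nonneg:
  assumes C: "C \<in> carrier_mat d d" and nn: "\<forall>i<d. \<forall>j<d. C$$(i,j) \<ge> (0::real)"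
  shows "\<forall>i<d. \<forall>j<d. (C ^\<^sub>m k)$$(i,j) \<ge> 0"
proof (induction k)
  case 0 thus ?case using C by auto
next
  case (Suc k)
  show ?case
  proof (intro allI impI)
    fix i j assume ij: "i<d" "j<d"
    have "(C ^\<^sub>m Suc k)$$(i,j) = (\<Sum>l<d. (C ^\<^sub>m k) $$ (i,l) * C $$ (l,j))"
      using mm_index[of "C ^\<^sub>m k" d d C d i j] C ij by simp
    also have "\<dots> \<ge> 0" using Suc nn ij by (intro sum_nonneg) auto
    finally show "(C ^\<^sub>m Suc k)$$(i,j) \<ge> 0" .
  qed
qed

lemma resolvent:
  assumes C: "C \<in> carrier_mat d d" and d: "0<d" and nn: "\<forall>i<d. \<forall>j<d. C$$(i,j) \<ge> 0"
  shows "\<exists>i0<d. \<forall>t. spec_rad C < t \<longrightarrow> (\<exists>z. z \<in> carrier_vec d \<and> (\<forall>i<d. z$i > 0) \<and>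
            (\<forall>i<d. (C *\<^sub>v z)$i = t * z$i - 1) \<and> z$i0 \<ge> 1/(t - spec_rad C))"
proof -
  define \<rho> where "\<rho> = spec_rad C"
  have rho0: "\<rho> \<ge> 0" using spec_rad_nonneg[OF C d] unfolding \<rho>_def .
  obtain \<mu> w where w: "w \<in> carrier_vec d" "w \<noteq> 0\<^sub>v d"
    and ev: "map_mat complex_of_real C *\<^sub>v w = \<mu> \<cdot>\<^sub>v w" and mu: "cmod \<mu> = \<rho>"
    using spec_rad_attained[OF C d] unfolding \<rho>_def by blast
  define M where "M = Max ((\<lambda>j. cmod (w$j)) ` {..<d})"
  have fin: "finite ((\<lambda>j. cmod (w$j)) ` {..<d})" "(\<lambda>j. cmod (w$j)) ` {..<d} \<noteq> {}" using d by auto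
  obtain i0 where i0: "i0 < d" "cmod (w$i0) = M" using Max_in[OF fin] unfolding M_def by auto
  have Mge: "cmod (w$j) \<le> M" if "j<d" for j unfolding M_def using Max_ge[OF fin(1)] that by auto
  obtain j where j: "j<d" "w$j \<noteq> 0" using w by (metis carrier_vecD eq_vecI index_zero_vec(1,2))
  have Mpos: "M > 0" using Mge[OF j(1)] j by (smt (verit) zero_less_norm_iff)
  define a where "a j = cmod (w$j) / M" for j
  have a1: "a j \<le> 1" if "j<d" for j using Mge[OF that] Mpos unfolding a_def by auto
  have a0: "a j \<ge> 0" for j using Mpos unfolding a_def by auto
  have ai0: "a i0 = 1" using i0 Mpos unfolding a_def by auto
  have eig: "\<rho> * a i \<le> (\<Sum>j<d. C$$(i,j) * a j)" if i: "i<d" for i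
  proof -
    have "\<rho> * cmod (w$i) = cmod ((\<mu> \<cdot>\<^sub>v w)$i)" using w i mu by (auto simp: norm_mult)
    also have "\<dots> = cmod ((map_mat complex_of_real C *\<^sub>v w)$i)" using ev by simp
    also have "\<dots> = cmod (\<Sum>j<d. complex_of_real (C$$(i,j)) * w$j)"
      using mv_index[of "map_mat complex_of_real C" d d w i] C w i by auto
    also have "\<dots> \<le> (\<Sum>j<d. cmod (complex_of_real (C$$(i,j)) * w$j))" by (rule norm_sum)
    also have "\<dots> = (\<Sum>j<d. C$$(i,j) * cmod (w$j))"
      using nn i by (auto simp: norm_mult intro!: sum.cong)
    finally have "\<rho> * cmod (w$i) / M \<le> (\<Sum>j<d. C$$(i,j) * cmod (w$j)) / M"
      using Mpos by (simp add: divide_right_mono)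
    thus ?thesis unfolding a_def by (simp add: sum_divide_distrib)
  qed
  define pv where "pv k = (C ^\<^sub>m k) *\<^sub>v ones d" for k
  have pv_car: "pv k \<in> carrier_vec d" for k unfolding pv_def carrier_vec_def using C by simp
  have pv0: "pv 0 $ i = 1" if "i<d" for i unfolding pv_def ones_def using C that by auto
  have pvS: "pv (Suc k) $ i = (\<Sum>j<d. C$$(i,j) * pv k $ j)" if "i<d" for k i
  proof -
    have "pv (Suc k) = C *\<^sub>v pv k" unfolding pv_def
      by (rule pow_suc_vec[OF C]) (auto simp: ones_def)
    thus ?thesis using mv_index[OF C _ that, of "pv k"] pv_car[of k] by simp
  qed
  have pv_nn: "pv k $ i \<ge> 0" if "i<d" for k i
  proof -
    have "pv k $ i = (\<Sum>j<d. (C ^\<^sub>m k) $$ (i,j) * ones d $ j)"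
      unfolding pv_def using mv_index[of "C ^\<^sub>m k" d d "ones d" i] C that by (auto simp: ones_def)
    also have "\<dots> \<ge> 0" using pow_nonneg[OF C nn, of k] that by (intro sum_nonneg) (auto simp: ones_def)
    finally show ?thesis .
  qed
  have low: "\<rho>^k * a i \<le> pv k $ i" if "i<d" for k i
    using that
  proof (induction k arbitrary: i)
    case 0 thus ?case using a1 pv0 by simp
  next
    case (Suc k)
    have "\<rho>^Suc k * a i = \<rho>^k * (\<rho> * a i)" by simp
    also have "\<dots> \<le> \<rho>^k * (\<Sum>j<d. C$$(i,j) * a j)"
      using eig[OF Suc.prems] rho0 by (simp add: mult_left_mono)
    also have "\<dots> = (\<Sum>j<d. C$$(i,j) * (\<rho>^k * a j))" by (simp add: sum_distrib_left ac_simps)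
    also have "\<dots> \<le> (\<Sum>j<d. C$$(i,j) * pv k $ j)"
      using Suc.IH nn Suc.prems by (intro sum_mono mult_left_mono) auto
    also have "\<dots> = pv (Suc k) $ i" using pvS[OF Suc.prems] by simp
    finally show ?case .
  qed
  show ?thesis
  proof (intro exI[of _ i0] conjI allI impI)
    show "i0 < d" by fact
    fix t assume t: "spec_rad C < t"
    hence t: "\<rho> < t" unfolding \<rho>_def .
    have tpos: "t > 0" using t rho0 by auto
    define \<tau> where "\<tau> = (\<rho> + t)/2"
    have tau: "spec_rad C < \<tau>" "\<tau> < t" "\<tau> > 0" using t rho0 unfolding \<tau>_def \<rho>_def by auto
    obtain b where b: "\<And>k i j. i<d \<Longrightarrow> j<d \<Longrightarrow> \<bar>(C ^\<^sub>m k) $$ (i,j)\<bar> \<le> b * \<tau>^k"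
      using pow_bound[OF C d tau(1)] by blast
    have pvb: "pv k $ i \<le> d * b * \<tau>^k" if "i<d" for k i
    proof -
      have "pv k $ i = (\<Sum>j<d. (C ^\<^sub>m k) $$ (i,j) * ones d $ j)"
        unfolding pv_def using mv_index[of "C ^\<^sub>m k" d d "ones d" i] C that by (auto simp: ones_def)
      also have "\<dots> \<le> (\<Sum>j<d. b * \<tau>^k)"
        using b that by (intro sum_mono) (auto simp: ones_def abs_le_iff)
      finally show ?thesis by simp
    qed
    define f where "f i k = pv k $ i / t^Suc k" for i k
    have f_nn: "f i k \<ge> 0" if "i<d" for i k unfolding f_def using pv_nn[OF that] tpos by simp
    have summ: "summable (f i)" if i: "i<d" for i
    proof (rule summable_comparison_test')
      show "summable (\<lambda>k. (d*b/t) * (\<tau>/t)^k)"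
        using tau tpos by (intro summable_mult summable_geometric) auto
      fix k
      have "norm (f i k) = pv k $ i / t^Suc k" using pv_nn[OF i] tpos unfolding f_def by simp
      also have "\<dots> \<le> d*b*\<tau>^k / t^Suc k" using pvb[OF i] tpos by (simp add: divide_right_mono)
      also have "\<dots> = (d*b/t) * (\<tau>/t)^k" by (simp add: power_divide)
      finally show "norm (f i k) \<le> (d*b/t) * (\<tau>/t)^k" .
    qed
    define z where "z = vec d (\<lambda>i. suminf (f i))"
    have zc: "z \<in> carrier_vec d" unfolding z_def by simp
    have split: "suminf (f i) = f i 0 + (\<Sum>k. f i (Suc k))" if "i<d" for i
      using suminf_split_head[OF summ[OF that]] by simp
    have summS: "summable (\<lambda>k. f i (Suc k))" if "i<d" for i
      using summ[OF that] summable_Suc_iff by blast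
    show "\<exists>z. z \<in> carrier_vec d \<and> (\<forall>i<d. z$i > 0) \<and>
            (\<forall>i<d. (C *\<^sub>v z)$i = t * z$i - 1) \<and> z$i0 \<ge> 1/(t - spec_rad C)"
    proof (intro exI[of _ z] conjI allI impI zc)
      fix i assume i: "i<d"
      have "z$i = 1/t + (\<Sum>k. f i (Suc k))" using split[OF i] pv0[OF i] i unfolding z_def f_def by simp
      moreover have "(\<Sum>k. f i (Suc k)) \<ge> 0" using f_nn[OF i] summS[OF i] by (intro suminf_nonneg) auto
      ultimately show "z$i > 0" using add_pos_nonneg[of "1/t"] tpos by simp
    next
      fix i assume i: "i<d"
      have "(C *\<^sub>v z)$i = (\<Sum>j<d. C$$(i,j) * suminf (f j))"
        using mv_index[OF C _ i, of z] zc unfolding z_def by simp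
      also have "\<dots> = (\<Sum>j<d. \<Sum>k. C$$(i,j) * f j k)"
        using summ by (intro sum.cong refl suminf_mult[symmetric]) auto
      also have "\<dots> = (\<Sum>k. \<Sum>j<d. C$$(i,j) * f j k)"
        using summ by (intro suminf_sum[symmetric] summable_mult) auto
      also have "\<dots> = (\<Sum>k. t * f i (Suc k))"
      proof (rule arg_cong[of _ _ suminf], rule ext)
        fix k
        have "(\<Sum>j<d. C$$(i,j) * f j k) = (\<Sum>j<d. C$$(i,j) * pv k $ j) / t^Suc k"
          unfolding f_def by (simp add: sum_divide_distrib)
        also have "\<dots> = pv (Suc k) $ i / t^Suc k" using pvS[OF i] by simp
        also have "\<dots> = t * f i (Suc k)" unfolding f_def using tpos by simp
        finally show "(\<Sum>j<d. C$$(i,j) * f j k) = t * f i (Suc k)" .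
      qed
      also have "\<dots> = t * (\<Sum>k. f i (Suc k))" using summS[OF i] by (rule suminf_mult)
      also have "\<dots> = t * (z$i - 1/t)" using split[OF i] pv0[OF i] i unfolding z_def f_def by simp
      also have "\<dots> = t * z$i - 1" using tpos by (simp add: right_diff_distrib)
      finally show "(C *\<^sub>v z)$i = t * z$i - 1" .
    next
      have g: "(\<lambda>k. (1/t) * (\<rho>/t)^k) sums ((1/t) * (1 / (1 - \<rho>/t)))"
        using t rho0 tpos by (intro sums_mult geometric_sums) auto
      have "(1/t) * (1 / (1 - \<rho>/t)) = 1/(t - \<rho>)" using tpos t by (simp add: field_simps)
      hence g: "(\<lambda>k. (1/t) * (\<rho>/t)^k) sums (1/(t - \<rho>))" using g by simp
      have "1/(t-\<rho>) = (\<Sum>k. (1/t) * (\<rho>/t)^k)" using g by (simp add: sums_iff)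
      also have "\<dots> \<le> suminf (f i0)"
      proof (rule suminf_le)
        fix k
        have "(1/t) * (\<rho>/t)^k = \<rho>^k * a i0 / t^Suc k" using ai0 by (simp add: power_divide)
        also have "\<dots> \<le> f i0 k" unfolding f_def using low[OF i0(1)] tpos by (simp add: divide_right_mono)
        finally show "(1/t) * (\<rho>/t)^k \<le> f i0 k" .
      qed (use g summ[OF i0(1)] in \<open>auto simp: sums_iff\<close>)
      finally show "z$i0 \<ge> 1/(t - spec_rad C)" unfolding z_def \<rho>_def using i0 by simp
    qed
  qed
qed




lemma subseq_multi:
  fixes f :: "nat \<Rightarrow> nat \<Rightarrow> real"
  assumes "\<And>k i. i < d \<Longrightarrow> \<bar>f k i\<bar> \<le> B"
  shows "\<exists>r. strict_mono r \<and> (\<forall>i<d. convergent (\<lambda>k. f (r k) i))"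
  using assms
proof (induction d)
  case 0 show ?case by (intro exI[of _ id]) (auto simp: strict_mono_def)
next
  case (Suc d)
  then obtain r where r: "strict_mono r" "\<forall>i<d. convergent (\<lambda>k. f (r k) i)" by force
  obtain r' where r': "strict_mono r'" "monoseq (\<lambda>k. f (r (r' k)) d)"
    using seq_monosub[of "\<lambda>k. f (r k) d"] by (auto simp: o_def)
  have "Bseq (\<lambda>k. f (r (r' k)) d)" using Suc.prems by (intro BseqI'[of _ B]) auto
  hence cd: "convergent (\<lambda>k. f (r (r' k)) d)" using Bseq_monoseq_convergent r'(2) by blast
  have sm: "strict_mono (\<lambda>k. r (r' k))" using r(1) r'(1) by (simp add: strict_mono_def)
  show ?case
  proof (intro exI[of _ "\<lambda>k. r (r' k)"] conjI sm allI impI)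
    fix i assume i: "i < Suc d"
    show "convergent (\<lambda>k. f (r (r' k)) i)"
    proof (cases "i = d")
      case True thus ?thesis using cd by simp
    next
      case False
      hence "convergent (\<lambda>k. f (r k) i)" using r(2) i by auto
      from convergent_subseq_convergent[OF this r'(1)] show ?thesis by (simp add: o_def)
    qed
  qed
qed

lemma pf_seq:
  assumes C: "C \<in> carrier_mat d d" and d: "0<d" and nn: "\<forall>i<d. \<forall>j<d. C$$(i,j) \<ge> 0"
  shows "\<exists>u t u0. (\<forall>k. u k \<in> carrier_vec d \<and> (\<forall>i<d. u k $ i > 0) \<and>
            (\<forall>i<d. (C *\<^sub>v u k)$i \<le> t k * u k $ i)) \<and> t \<longlonglongrightarrow> spec_rad C \<and>
          (\<forall>i<d. (\<lambda>k. u k $ i) \<longlonglongrightarrow> u0 $ i) \<and> u0 \<in> carrier_vec d \<and> (\<forall>i<d. u0$i \<ge> 0) \<and>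
          (\<Sum>i<d. u0$i) = 1 \<and> C *\<^sub>v u0 = spec_rad C \<cdot>\<^sub>v u0"
proof -
  define \<rho> where "\<rho> = spec_rad C"
  obtain i0 where i0: "i0 < d" and H: "\<And>t. \<rho> < t \<Longrightarrow> (\<exists>z. z \<in> carrier_vec d \<and> (\<forall>i<d. z$i > 0) \<and>
            (\<forall>i<d. (C *\<^sub>v z)$i = t * z$i - 1) \<and> z$i0 \<ge> 1/(t - \<rho>))"
    using resolvent[OF C d nn] unfolding \<rho>_def by blast
  define T where "T k = \<rho> + inverse (real (Suc k))" for k
  have Tgt: "\<rho> < T k" for k unfolding T_def by simp
  define Z where "Z k = (SOME z. z \<in> carrier_vec d \<and> (\<forall>i<d. z$i > 0) \<and>
            (\<forall>i<d. (C *\<^sub>v z)$i = T k * z$i - 1) \<and> z$i0 \<ge> 1/(T k - \<rho>))" for k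
  have Z: "Z k \<in> carrier_vec d \<and> (\<forall>i<d. Z k $i > 0) \<and>
            (\<forall>i<d. (C *\<^sub>v Z k)$i = T k * Z k $i - 1) \<and> Z k $i0 \<ge> 1/(T k - \<rho>)" for k
    unfolding Z_def by (rule someI_ex[OF H[OF Tgt]])
  have Zc: "Z k \<in> carrier_vec d" and Zd: "dim_vec (Z k) = d" and Zpos: "\<And>i. i<d \<Longrightarrow> Z k $i > 0"
    and ZC: "\<And>i. i<d \<Longrightarrow> (C *\<^sub>v Z k)$i = T k * Z k $i - 1" and Zi0: "Z k $i0 \<ge> 1/(T k - \<rho>)" for k
    using Z[of k] by auto
  define N where "N k = (\<Sum>i<d. Z k $ i)" for k
  have Nge: "N k \<ge> Z k $ i" if "i<d" for i k
    unfolding N_def using Z[of k] that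
    by (intro member_le_sum) auto
  have Npos: "N k > 0" for k using Nge[OF i0, of k] Z[of k] i0 by force
  have Ninv: "inverse (N k) \<le> inverse (real (Suc k))" for k
  proof -
    have "1/(T k - \<rho>) = real (Suc k)" unfolding T_def by (simp add: divide_inverse)
    hence "real (Suc k) \<le> N k" using Z[of k] Nge[OF i0, of k] by simp
    thus ?thesis by (simp add: le_imp_inverse_le)
  qed
  define w where "w k = inverse (N k) \<cdot>\<^sub>v Z k" for k
  have wc: "w k \<in> carrier_vec d" for k unfolding w_def using Z by auto
  have wi: "w k $ i = Z k $ i / N k" if "i<d" for k i unfolding w_def using Zd[of k] that
    by (simp add: divide_inverse ac_simps)
  have wpos: "w k $ i > 0" if "i<d" for k i using wi[OF that] Z[of k] Npos[of k] that by simp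
  have wle1: "\<bar>w k $ i\<bar> \<le> 1" if "i<d" for k i using wi[OF that] Zpos[OF that, of k] Nge[OF that, of k] Npos[of k]
    by simp
  have wsum: "(\<Sum>i<d. w k $ i) = 1" for k
    using wi Npos[of k] unfolding N_def by (simp add: sum_divide_distrib[symmetric])
  have Cw: "(C *\<^sub>v w k)$i = T k * w k $ i - inverse (N k)" if i: "i<d" for k i
  proof -
    have "C *\<^sub>v w k = inverse (N k) \<cdot>\<^sub>v (C *\<^sub>v Z k)" unfolding w_def
      using mult_mat_vec[OF C, of "Z k" "inverse (N k)"] Z[of k] by simp
    hence "(C *\<^sub>v w k)$i = inverse (N k) * (T k * Z k $ i - 1)" using Z[of k] i C by simp
    thus ?thesis using wi[OF i] by (simp add: divide_inverse algebra_simps)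
  qed
  obtain r where r: "strict_mono r" "\<forall>i<d. convergent (\<lambda>k. w (r k) $ i)"
    using subseq_multi[of d "\<lambda>k i. w k $ i" 1] wle1 by blast
  define u0 where "u0 = vec d (\<lambda>i. lim (\<lambda>k. w (r k) $ i))"
  have u0c: "u0 \<in> carrier_vec d" unfolding u0_def by simp
  have conv: "(\<lambda>k. w (r k) $ i) \<longlonglongrightarrow> u0 $ i" if "i<d" for i
    using r(2) that unfolding u0_def by (simp add: convergent_LIMSEQ_iff)
  have Tlim: "T \<longlonglongrightarrow> \<rho>" unfolding T_def
    using tendsto_add[OF tendsto_const LIMSEQ_inverse_real_of_nat, of \<rho>] by simp
  have Nlim: "(\<lambda>k. inverse (N k)) \<longlonglongrightarrow> 0"
    by (rule tendsto_sandwich[of "\<lambda>_. 0" _ _ "\<lambda>k. inverse (real (Suc k))"])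
       (use Npos Ninv LIMSEQ_inverse_real_of_nat in \<open>simp_all add: less_imp_le del: inverse_of_nat_le\<close>)
  show ?thesis
  proof (intro exI[of _ "\<lambda>k. w (r k)"] exI[of _ "\<lambda>k. T (r k)"] exI[of _ u0] conjI allI impI u0c)
    fix k
    show "w (r k) \<in> carrier_vec d" by (rule wc)
  next
    fix k i assume i: "i<d"
    show "w (r k) $ i > 0" using wpos[OF i] by auto
  next
    fix k i assume i: "i<d"
    have "inverse (N (r k)) > 0" using Npos by simp
    thus "(C *\<^sub>v w (r k))$i \<le> T (r k) * w (r k) $ i"
      using Cw[OF i, of "r k"] by simp
  next
    show "(\<lambda>k. T (r k)) \<longlonglongrightarrow> spec_rad C" unfolding \<rho>_def[symmetric]
      using LIMSEQ_subseq_LIMSEQ[OF Tlim r(1)] by (simp add: o_def)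
  next
    fix i assume "i<d" thus "(\<lambda>k. w (r k) $ i) \<longlonglongrightarrow> u0 $ i" by (rule conv)
  next
    fix i assume i: "i<d"
    show "u0 $ i \<ge> 0"
      by (rule LIMSEQ_le_const[OF conv[OF i]]) (use wpos[OF i] in \<open>auto intro: less_imp_le\<close>)
  next
    have "(\<lambda>k. \<Sum>i<d. w (r k) $ i) \<longlonglongrightarrow> (\<Sum>i<d. u0 $ i)"
      by (rule tendsto_sum) (use conv in auto)
    moreover have "(\<lambda>k. \<Sum>i<d. w (r k) $ i) \<longlonglongrightarrow> 1" using wsum by simp
    ultimately show "(\<Sum>i<d. u0 $ i) = 1" using LIMSEQ_unique by blast
  next
    show "C *\<^sub>v u0 = spec_rad C \<cdot>\<^sub>v u0"
    proof (rule eq_vecI)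
      fix i assume "i < dim_vec (spec_rad C \<cdot>\<^sub>v u0)"
      hence i: "i<d" using u0c by simp
      have "(\<lambda>k. (C *\<^sub>v w (r k))$i) \<longlonglongrightarrow> (\<Sum>j<d. C$$(i,j) * u0$j)"
        using mv_index[OF C _ i] wc u0c
        by (simp, intro tendsto_sum tendsto_mult tendsto_const conv) auto
      moreover have "(\<lambda>k. (C *\<^sub>v w (r k))$i) \<longlonglongrightarrow> \<rho> * u0$i - 0"
      proof -
        have "(\<lambda>k. T (r k) * w (r k) $ i - inverse (N (r k))) \<longlonglongrightarrow> \<rho> * u0$i - 0"
          by (intro tendsto_diff tendsto_mult conv[OF i]
              LIMSEQ_subseq_LIMSEQ[OF Tlim r(1), unfolded o_def]
              LIMSEQ_subseq_LIMSEQ[OF Nlim r(1), unfolded o_def])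
        thus ?thesis using Cw[OF i] by simp
      qed
      ultimately have "(\<Sum>j<d. C$$(i,j) * u0$j) = \<rho> * u0$i" using LIMSEQ_unique by fastforce
      thus "(C *\<^sub>v u0) $ i = (spec_rad C \<cdot>\<^sub>v u0) $ i"
        using mv_index[OF C _ i, of u0] u0c i unfolding \<rho>_def by simp
    qed (use C u0c in simp)
  qed
qed




lemma pick_bij:
  assumes fK: "finite K" and cK: "card K = m"
  shows "bij_betw (pick K) {..<m} K"
proof (rule bij_betw_imageI)
  have mono: "pick K x < pick K y" if "x < y" "y < m" for x y
    using pick_mono_le[of y K x] that cK by simp
  show "inj_on (pick K) {..<m}"
  proof (rule inj_onI)
    fix x y assume xy: "x \<in> {..<m}" "y \<in> {..<m}" "pick K x = pick K y"
    show "x = y"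
    proof (rule ccontr)
      assume "x \<noteq> y"
      hence "x < y \<or> y < x" by linarith
      thus False using mono xy by (metis lessThan_iff less_irrefl)
    qed
  qed
  show "pick K ` {..<m} = K"
  proof
    show "pick K ` {..<m} \<subseteq> K"
    proof
      fix x assume "x \<in> pick K ` {..<m}"
      then obtain c where c: "c < m" "x = pick K c" by blast
      show "x \<in> K" unfolding c(2) by (rule pick_in_set_le) (use c cK in simp)
    qed
    show "K \<subseteq> pick K ` {..<m}"
    proof
      fix j assume j: "j \<in> K"
      have "{a\<in>K. a < j} \<subset> K" using j by blast
      hence c: "card {a\<in>K. a < j} < m" using psubset_card_mono[OF fK] cK by simp
      show "j \<in> pick K ` {..<m}"
        by (rule image_eqI[of _ _ "card {a\<in>K. a < j}"]) (use pick_card_in_set[OF j] c in simp_all)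
    qed
  qed
qed

lemma pick_lessThan: "i < m \<Longrightarrow> pick {..<m} i = i"
proof -
  assume i: "i<m"
  have e: "{a\<in>{..<m}. a < i} = {..<i}" using i by auto
  have c: "card {a\<in>{..<m}. a < i} = i" unfolding e by simp
  have "pick {..<m} (card {a\<in>{..<m}. a < i}) = i" by (rule pick_card_in_set) (use i in simp)
  thus ?thesis unfolding c .
qed

locale wn =
  fixes m n :: nat and A B :: "real mat"
  assumes m_pos: "0 < m" and WN: "WN_pair m n A B"
begin

lemma A_car: "A \<in> carrier_mat m n" and B_car: "B \<in> carrier_mat m n" and mn: "m \<le> n"
  and A_nn0: "nonneg_mat A" and B_nn0: "nonneg_mat B"
  and B_row: "\<And>i. i<m \<Longrightarrow> \<exists>j<n. B$$(i,j) \<noteq> 0"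
  and B_col: "\<And>j. j<n \<Longrightarrow> \<exists>!i. i<m \<and> B$$(i,j) > 0"
  using WN unfolding WN_pair_def by blast+

lemma A_nn: "\<And>i j. i<m \<Longrightarrow> j<n \<Longrightarrow> A$$(i,j) \<ge> 0"
  using A_nn0 A_car unfolding nonneg_mat_def by simp

lemma B_nn: "\<And>i j. i<m \<Longrightarrow> j<n \<Longrightarrow> B$$(i,j) \<ge> 0"
  using B_nn0 B_car unfolding nonneg_mat_def by simp

definition h :: "nat \<Rightarrow> nat" where "h j = (THE i. i<m \<and> B$$(i,j) > 0)"

lemma h_prop: "j<n \<Longrightarrow> h j < m \<and> B$$(h j, j) > 0"
  unfolding h_def using theI'[OF B_col] by blast

lemma h_unique: "j<n \<Longrightarrow> i<m \<Longrightarrow> B$$(i,j) \<noteq> 0 \<Longrightarrow> h j = i"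
proof -
  assume j: "j<n" and i: "i<m" and ne: "B$$(i,j) \<noteq> 0"
  hence pos: "B$$(i,j) > 0" using B_nn[OF i j] by auto
  show "h j = i" using B_col[OF j] h_prop[OF j] pos i by blast
qed

lemma B_zero: "j<n \<Longrightarrow> i<m \<Longrightarrow> i \<noteq> h j \<Longrightarrow> B$$(i,j) = 0"
  using h_unique by blast

lemma row_exists: "i<m \<Longrightarrow> \<exists>j<n. h j = i"
proof -
  assume i: "i<m"
  obtain j where "j<n" "B$$(i,j) \<noteq> 0" using B_row[OF i] by blast
  thus ?thesis using h_unique[OF _ i] by blast
qed

lemma cols_sub_dims:
  assumes "K \<subseteq> {..<n}" "card K = m" "dim_col X = n"
  shows "cols_sub X K \<in> carrier_mat (dim_row X) m"
proof -
  have e: "{j. j < n \<and> j \<in> K} = K" using assms(1) by auto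
  have e2: "{i. i < dim_row X \<and> i \<in> {..<dim_row X}} = {..<dim_row X}" by auto
  have d1: "dim_row (submatrix X {..<dim_row X} K) = dim_row X"
    unfolding dim_submatrix(1) e2 by simp
  have d2: "dim_col (submatrix X {..<dim_row X} K) = m"
    unfolding dim_submatrix(2) assms(3) e assms(2) ..
  show ?thesis unfolding cols_sub_def carrier_mat_def using d1 d2 by simp
qed

lemma cols_sub_car:
  assumes "K \<subseteq> {..<n}" "card K = m"
  shows "cols_sub A K \<in> carrier_mat m m" "cols_sub B K \<in> carrier_mat m m"
  using cols_sub_dims[OF assms, of A] cols_sub_dims[OF assms, of B] A_car B_car by auto

lemma cols_sub_index:
  assumes "K \<subseteq> {..<n}" "card K = m" "X \<in> carrier_mat m n" "i<m" "c<m"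
  shows "cols_sub X K $$ (i,c) = X $$ (i, pick K c)"
proof -
  have e: "{j. j < dim_col X \<and> j \<in> K} = K" using assms(1,3) by auto
  have e2: "{j. j < dim_row X \<and> j \<in> {..<dim_row X}} = {..<dim_row X}" by auto
  have r: "dim_row X = m" using assms(3) by simp
  have "i < card {j. j < dim_row X \<and> j \<in> {..<dim_row X}}" unfolding e2 r using assms(4) by simp
  moreover have "c < card {j. j < dim_col X \<and> j \<in> K}" unfolding e assms(2) using assms(5) .
  ultimately have "submatrix X {..<dim_row X} K $$ (i,c) = X $$ (pick {..<dim_row X} i, pick K c)"
    by (rule submatrix_index)
  thus ?thesis unfolding cols_sub_def r pick_lessThan[OF assms(4)] .
qed

lemma M_setD:
  assumes K: "K \<in> M_set B"
  shows "K \<subseteq> {..<n}" "card K = m" "finite K"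
    "\<And>c. c<m \<Longrightarrow> pick K c \<in> K \<and> pick K c < n \<and> h (pick K c) < m"
    "\<And>c c'. c<m \<Longrightarrow> c'<m \<Longrightarrow> h (pick K c) = h (pick K c') \<Longrightarrow> c = c'"
    "\<And>i. i<m \<Longrightarrow> \<exists>c<m. h (pick K c) = i"
proof -
  show Kn: "K \<subseteq> {..<n}" and cK: "card K = m" using K B_car unfolding M_set_def by auto
  show fK: "finite K" using Kn finite_subset by blast
  have mono: "monomial_mat (cols_sub B K)" using K unfolding M_set_def by auto
  have car: "cols_sub B K \<in> carrier_mat m m" using cols_sub_car[OF Kn cK] by auto
  have bij: "bij_betw (pick K) {..<m} K" by (rule pick_bij[OF fK cK])
  show pk: "\<And>c. c<m \<Longrightarrow> pick K c \<in> K \<and> pick K c < n \<and> h (pick K c) < m"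
    using bij Kn h_prop by (auto simp: bij_betw_def)
  have ent: "cols_sub B K $$ (i,c) > 0 \<longleftrightarrow> h (pick K c) = i" if "i<m" "c<m" for i c
  proof -
    have e: "cols_sub B K $$ (i,c) = B $$ (i, pick K c)" using cols_sub_index[OF Kn cK B_car that] .
    have pn: "pick K c < n" using pk[OF that(2)] by blast
    show ?thesis unfolding e
    proof
      assume "B $$ (i, pick K c) > 0"
      thus "h (pick K c) = i" using h_unique[OF pn that(1)] by simp
    next
      assume "h (pick K c) = i"
      thus "B $$ (i, pick K c) > 0" using h_prop[OF pn] by simp
    qed
  qed
  have rows0: "\<forall>i<dim_row (cols_sub B K). \<exists>!c. c < dim_col (cols_sub B K) \<and> cols_sub B K $$ (i,c) > 0"
    using mono unfolding monomial_mat_def by blast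
  have rows: "\<And>i. i<m \<Longrightarrow> \<exists>!c. c<m \<and> cols_sub B K $$ (i,c) > 0"
    using rows0 car by simp
  show "\<And>c c'. c<m \<Longrightarrow> c'<m \<Longrightarrow> h (pick K c) = h (pick K c') \<Longrightarrow> c = c'"
  proof -
    fix c c' assume c: "c<m" "c'<m" "h (pick K c) = h (pick K c')"
    have i: "h (pick K c) < m" using pk c by auto
    have p1: "c<m \<and> cols_sub B K $$ (h (pick K c), c) > 0" using ent[OF i c(1)] c by simp
    have p2: "c'<m \<and> cols_sub B K $$ (h (pick K c), c') > 0" using ent[OF i c(2)] c by simp
    show "c = c'" using rows[OF i] p1 p2 by (elim ex1E) blast
  qed
  show "\<And>i. i<m \<Longrightarrow> \<exists>c<m. h (pick K c) = i"
  proof -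
    fix i assume i: "i<m"
    from rows[OF i] obtain c where "c<m" "cols_sub B K $$ (i,c) > 0" by (elim ex1E) blast
    thus "\<exists>c<m. h (pick K c) = i" using ent[OF i] by blast
  qed
qed

lemma M_setI:
  assumes Kn: "K \<subseteq> {..<n}" and cK: "card K = m" and inj: "inj_on h K"
  shows "K \<in> M_set B"
proof -
  have fK: "finite K" using Kn finite_subset by blast
  have bij: "bij_betw (pick K) {..<m} K" by (rule pick_bij[OF fK cK])
  have pk: "\<And>c. c<m \<Longrightarrow> pick K c \<in> K \<and> pick K c < n \<and> h (pick K c) < m"
  proof -
    fix c assume c: "c<m"
    have "pick K c \<in> K" using bij_betw_apply[OF bij] c by simp
    thus "pick K c \<in> K \<and> pick K c < n \<and> h (pick K c) < m" using Kn h_prop by blast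
  qed
  have car: "cols_sub B K \<in> carrier_mat m m" using cols_sub_car[OF Kn cK] by auto
  have ent: "cols_sub B K $$ (i,c) > 0 \<longleftrightarrow> h (pick K c) = i" if "i<m" "c<m" for i c
  proof -
    have e: "cols_sub B K $$ (i,c) = B $$ (i, pick K c)" using cols_sub_index[OF Kn cK B_car that] .
    have pn: "pick K c < n" using pk[OF that(2)] by blast
    show ?thesis unfolding e
    proof
      assume "B $$ (i, pick K c) > 0"
      thus "h (pick K c) = i" using h_unique[OF pn that(1)] by simp
    next
      assume "h (pick K c) = i"
      thus "B $$ (i, pick K c) > 0" using h_prop[OF pn] by simp
    qed
  qed
  have hK: "h ` K = {..<m}"
  proof (rule card_subset_eq)
    show "h ` K \<subseteq> {..<m}" using Kn h_prop by auto
    show "card (h ` K) = card {..<m}" using card_image[OF inj] cK by simp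
  qed auto
  have injc: "c = c'" if "c<m" "c'<m" "h (pick K c) = h (pick K c')" for c c'
  proof -
    have "pick K c = pick K c'" using inj_onD[OF inj that(3)] pk[OF that(1)] pk[OF that(2)] by blast
    moreover have "inj_on (pick K) {..<m}" using bij by (rule bij_betw_imp_inj_on)
    ultimately show ?thesis using that by (simp add: inj_on_def)
  qed
  have surj: "\<exists>c<m. h (pick K c) = i" if "i<m" for i
  proof -
    have "i \<in> h ` K" using hK that by simp
    then obtain j where j: "j \<in> K" "i = h j" by blast
    have "j \<in> pick K ` {..<m}" using bij_betw_imp_surj_on[OF bij] j(1) by simp
    then obtain c where "c<m" "j = pick K c" by blast
    thus ?thesis using j by blast
  qed
  have nn0: "cols_sub B K $$ (i,c) \<ge> 0" if "i<m" "c<m" for i c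
    using cols_sub_index[OF Kn cK B_car that] B_nn[OF that(1)] pk[OF that(2)] by simp
  have nn: "nonneg_mat (cols_sub B K)" using nn0 car unfolding nonneg_mat_def by auto
  have "monomial_mat (cols_sub B K)" unfolding monomial_mat_def
  proof (intro conjI allI impI nn)
    show "dim_row (cols_sub B K) = dim_col (cols_sub B K)" using car by auto
  next
    fix i assume "i < dim_row (cols_sub B K)"
    hence i: "i<m" using car by auto
    obtain c where c: "c<m" "h (pick K c) = i" using surj[OF i] by blast
    show "\<exists>!j. j < dim_col (cols_sub B K) \<and> cols_sub B K $$ (i, j) > 0"
    proof (rule ex1I[of _ c])
      show "c < dim_col (cols_sub B K) \<and> cols_sub B K $$ (i, c) > 0" using c ent[OF i c(1)] car by simp
      fix c' assume "c' < dim_col (cols_sub B K) \<and> cols_sub B K $$ (i, c') > 0"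
      hence "c'<m" "h (pick K c') = i" using ent[OF i] car by auto
      thus "c' = c" using injc[of c' c] c by simp
    qed
  next
    fix j assume "j < dim_col (cols_sub B K)"
    hence j: "j<m" using car by auto
    show "\<exists>!i. i < dim_row (cols_sub B K) \<and> cols_sub B K $$ (i, j) > 0"
    proof (rule ex1I[of _ "h (pick K j)"])
      show "h (pick K j) < dim_row (cols_sub B K) \<and> cols_sub B K $$ (h (pick K j), j) > 0"
        using ent[OF _ j] pk[OF j] car by simp
      fix i assume "i < dim_row (cols_sub B K) \<and> cols_sub B K $$ (i, j) > 0"
      thus "i = h (pick K j)" using ent[OF _ j] car by auto
    qed
  qed
  thus ?thesis unfolding M_set_def using Kn cK B_car by auto
qed

lemma M_set_finite: "finite (M_set B)"
proof -
  have "M_set B \<subseteq> Pow {..<n}" unfolding M_set_def using B_car by auto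
  thus ?thesis using finite_subset by blast
qed

lemma choice_in_M:
  assumes k: "\<And>l. l<m \<Longrightarrow> k l < n \<and> h (k l) = l"
  shows "k ` {..<m} \<in> M_set B"
proof (rule M_setI)
  show "k ` {..<m} \<subseteq> {..<n}" using k by auto
  have "inj_on k {..<m}"
  proof (rule inj_onI)
    fix x y assume "x \<in> {..<m}" "y \<in> {..<m}" "k x = k y"
    thus "x = y" using k[of x] k[of y] by (metis lessThan_iff)
  qed
  thus "card (k ` {..<m}) = m" by (simp add: card_image)
  show "inj_on h (k ` {..<m})" using k by (auto simp: inj_on_def)
qed

lemma M_set_nonempty: "M_set B \<noteq> {}"
proof -
  define k where "k l = (SOME j. j<n \<and> h j = l)" for l
  have "k l < n \<and> h (k l) = l" if "l<m" for l
    unfolding k_def by (rule someI_ex) (use row_exists[OF that] in auto)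
  thus ?thesis using choice_in_M by blast
qed

end




context wn begin

definition sig :: "nat set \<Rightarrow> nat \<Rightarrow> nat" where "sig K c = h (pick K c)"
definition sinv :: "nat set \<Rightarrow> nat \<Rightarrow> nat" where "sinv K i = (THE c. c<m \<and> sig K c = i)"

lemma sig_props:
  assumes K: "K \<in> M_set B"
  shows "\<And>c. c<m \<Longrightarrow> sig K c < m \<and> pick K c \<in> K \<and> pick K c < n"
    "\<And>c c'. c<m \<Longrightarrow> c'<m \<Longrightarrow> sig K c = sig K c' \<Longrightarrow> c = c'"
    "\<And>i. i<m \<Longrightarrow> sinv K i < m \<and> sig K (sinv K i) = i"
    "\<And>c. c<m \<Longrightarrow> sinv K (sig K c) = c"
proof -
  note D = M_setD[OF K]
  show 1: "\<And>c. c<m \<Longrightarrow> sig K c < m \<and> pick K c \<in> K \<and> pick K c < n"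
    using D(4) unfolding sig_def by blast
  show 2: "\<And>c c'. c<m \<Longrightarrow> c'<m \<Longrightarrow> sig K c = sig K c' \<Longrightarrow> c = c'"
    using D(5) unfolding sig_def by blast
  have ex1: "\<exists>!c. c<m \<and> sig K c = i" if "i<m" for i
    using D(6)[OF that] 2 unfolding sig_def by blast
  show 3: "\<And>i. i<m \<Longrightarrow> sinv K i < m \<and> sig K (sinv K i) = i"
    unfolding sinv_def using theI'[OF ex1] by blast
  show "\<And>c. c<m \<Longrightarrow> sinv K (sig K c) = c"
  proof -
    fix c assume c: "c<m"
    have "sig K c < m" using 1[OF c] by blast
    from 3[OF this] show "sinv K (sig K c) = c" using 2 c by blast
  qed
qed

lemma BK_entry:
  assumes K: "K \<in> M_set B" and i: "i<m" and c: "c<m"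
  shows "cols_sub B K $$ (i,c) = B $$ (i, pick K c)"
    "i \<noteq> sig K c \<Longrightarrow> B $$ (i, pick K c) = 0"
    "B $$ (sig K c, pick K c) > 0"
proof -
  note D = M_setD[OF K]
  show "cols_sub B K $$ (i,c) = B $$ (i, pick K c)" by (rule cols_sub_index[OF D(1,2) B_car i c])
  have pn: "pick K c < n" using sig_props(1)[OF K c] by blast
  show "i \<noteq> sig K c \<Longrightarrow> B $$ (i, pick K c) = 0" using B_zero[OF pn i] unfolding sig_def by blast
  show "B $$ (sig K c, pick K c) > 0" using h_prop[OF pn] unfolding sig_def by blast
qed

definition Dinv :: "nat set \<Rightarrow> real mat" where
  "Dinv K = mat m m (\<lambda>(c,i). if sig K c = i then 1 / B $$ (i, pick K c) else 0)"

lemma Dinv_props: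
  assumes K: "K \<in> M_set B"
  shows "cols_sub B K * Dinv K = 1\<^sub>m m" "Dinv K * cols_sub B K = 1\<^sub>m m"
proof -
  note D = M_setD[OF K]
  have BK: "cols_sub B K \<in> carrier_mat m m" using cols_sub_car[OF D(1,2)] by blast
  have DK: "Dinv K \<in> carrier_mat m m" unfolding Dinv_def by simp
  show "cols_sub B K * Dinv K = 1\<^sub>m m"
  proof (rule eq_matI)
    fix i i' assume "i < dim_row (1\<^sub>m m)" "i' < dim_col (1\<^sub>m m)"
    hence ii: "i<m" "i'<m" by auto
    define c0 where "c0 = sinv K i'"
    have c0: "c0 < m" "sig K c0 = i'" using sig_props(3)[OF K ii(2)] unfolding c0_def by auto
    have "(cols_sub B K * Dinv K) $$ (i,i') = (\<Sum>c<m. cols_sub B K $$ (i,c) * Dinv K $$ (c,i'))"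
      by (rule mm_index[OF BK DK ii])
    also have "\<dots> = (\<Sum>c<m. if c = c0 then B $$ (i, pick K c) / B $$ (i', pick K c) else 0)"
    proof (rule sum.cong[OF refl])
      fix c assume "c \<in> {..<m}"
      hence c: "c<m" by simp
      have e: "(sig K c = i') = (c = c0)" using sig_props(2)[OF K c c0(1)] c0 by auto
      show "cols_sub B K $$ (i,c) * Dinv K $$ (c,i') =
        (if c = c0 then B $$ (i, pick K c) / B $$ (i', pick K c) else 0)"
        unfolding BK_entry(1)[OF K ii(1) c] Dinv_def using c ii e by simp
    qed
    also have "\<dots> = B $$ (i, pick K c0) / B $$ (i', pick K c0)"
      using c0 by (simp add: sum.delta)
    also have "\<dots> = 1\<^sub>m m $$ (i,i')"
    proof (cases "i = i'")
      case True thus ?thesis using BK_entry(3)[OF K ii(1) c0(1)] c0 ii by simp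
    next
      case False thus ?thesis using BK_entry(2)[OF K ii(1) c0(1)] c0 ii by simp
    qed
    finally show "(cols_sub B K * Dinv K) $$ (i,i') = 1\<^sub>m m $$ (i,i')" .
  qed (use BK DK in simp_all)
  show "Dinv K * cols_sub B K = 1\<^sub>m m"
  proof (rule eq_matI)
    fix c c' assume "c < dim_row (1\<^sub>m m)" "c' < dim_col (1\<^sub>m m)"
    hence cc: "c<m" "c'<m" by auto
    have s: "sig K c < m" using sig_props(1)[OF K cc(1)] by blast
    have "(Dinv K * cols_sub B K) $$ (c,c') = (\<Sum>i<m. Dinv K $$ (c,i) * cols_sub B K $$ (i,c'))"
      by (rule mm_index[OF DK BK cc])
    also have "\<dots> = (\<Sum>i<m. if sig K c = i then B $$ (i, pick K c') / B $$ (i, pick K c) else 0)"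
    proof (rule sum.cong[OF refl])
      fix i assume "i \<in> {..<m}"
      hence i: "i<m" by simp
      show "Dinv K $$ (c,i) * cols_sub B K $$ (i,c') =
        (if sig K c = i then B $$ (i, pick K c') / B $$ (i, pick K c) else 0)"
        unfolding BK_entry(1)[OF K i cc(2)] Dinv_def using cc i by simp
    qed
    also have "\<dots> = B $$ (sig K c, pick K c') / B $$ (sig K c, pick K c)"
      using s by (simp add: sum.delta)
    also have "\<dots> = 1\<^sub>m m $$ (c,c')"
    proof (cases "c = c'")
      case True thus ?thesis using BK_entry(3)[OF K s cc(1)] cc by simp
    next
      case False
      hence "sig K c \<noteq> sig K c'" using sig_props(2)[OF K cc] by blast
      thus ?thesis using BK_entry(2)[OF K s cc(2)] cc False by simp
    qed
    finally show "(Dinv K * cols_sub B K) $$ (c,c') = 1\<^sub>m m $$ (c,c')" .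
  qed (use BK DK in simp_all)
qed

lemma inverse_is_Dinv:
  assumes K: "K \<in> M_set B"
  shows "the (mat_inverse (cols_sub B K)) = Dinv K"
proof -
  note D = M_setD[OF K]
  have BK: "cols_sub B K \<in> carrier_mat m m" using cols_sub_car[OF D(1,2)] by blast
  have DK: "Dinv K \<in> carrier_mat m m" unfolding Dinv_def by simp
  have U: "cols_sub B K \<in> Units (ring_mat TYPE(real) m ())"
    unfolding Units_def ring_mat_def using BK DK Dinv_props[OF K] by auto
  obtain X where X: "mat_inverse (cols_sub B K) = Some X"
    using mat_inverse(1)[OF BK, of "()"] U by (cases "mat_inverse (cols_sub B K)") auto
  have X2: "cols_sub B K * X = 1\<^sub>m m" "X \<in> carrier_mat m m" using mat_inverse(2)[OF BK X] by auto
  have "X = (Dinv K * cols_sub B K) * X" unfolding Dinv_props(2)[OF K] using X2(2) by simp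
  also have "\<dots> = Dinv K * (cols_sub B K * X)" using DK BK X2 by (simp add: assoc_mult_mat[of _ m m _ m _ m])
  also have "\<dots> = Dinv K" using X2 DK by simp
  finally show ?thesis using X by simp
qed

lemma CK_car:
  assumes K: "K \<in> M_set B"
  shows "C_K A B K \<in> carrier_mat m m"
proof -
  note D = M_setD[OF K]
  have AK: "cols_sub A K \<in> carrier_mat m m" using cols_sub_car[OF D(1,2)] by blast
  have DK: "Dinv K \<in> carrier_mat m m" unfolding Dinv_def by simp
  show ?thesis unfolding C_K_def inverse_is_Dinv[OF K] using mult_carrier_mat[OF DK AK] .
qed

lemma CK_entry:
  assumes K: "K \<in> M_set B" and c: "c<m" and b: "b<m"
  shows "C_K A B K $$ (c,b) = A $$ (sig K c, pick K b) / B $$ (sig K c, pick K c)"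
proof -
  note D = M_setD[OF K]
  have AK: "cols_sub A K \<in> carrier_mat m m" using cols_sub_car[OF D(1,2)] by blast
  have DK: "Dinv K \<in> carrier_mat m m" unfolding Dinv_def by simp
  have s: "sig K c < m" using sig_props(1)[OF K c] by blast
  have "C_K A B K $$ (c,b) = (\<Sum>i<m. Dinv K $$ (c,i) * cols_sub A K $$ (i,b))"
    unfolding C_K_def inverse_is_Dinv[OF K] by (rule mm_index[OF DK AK c b])
  also have "\<dots> = (\<Sum>i<m. if sig K c = i then A $$ (i, pick K b) / B $$ (i, pick K c) else 0)"
  proof (rule sum.cong[OF refl])
    fix i assume "i \<in> {..<m}"
    hence i: "i<m" by simp
    show "Dinv K $$ (c,i) * cols_sub A K $$ (i,b) =
        (if sig K c = i then A $$ (i, pick K b) / B $$ (i, pick K c) else 0)"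
      unfolding cols_sub_index[OF D(1,2) A_car i b] Dinv_def using c i by simp
  qed
  also have "\<dots> = A $$ (sig K c, pick K b) / B $$ (sig K c, pick K c)"
    using s by (simp add: sum.delta)
  finally show ?thesis .
qed

lemma CK_nn:
  assumes K: "K \<in> M_set B"
  shows "\<forall>c<m. \<forall>b<m. C_K A B K $$ (c,b) \<ge> 0"
proof (intro allI impI)
  fix c b assume cb: "c<m" "b<m"
  have s: "sig K c < m" "pick K b < n" using sig_props(1)[OF K cb(1)] sig_props(1)[OF K cb(2)] by auto
  show "C_K A B K $$ (c,b) \<ge> 0" unfolding CK_entry[OF K cb]
    using A_nn[OF s] BK_entry(3)[OF K s(1) cb(1)] by simp
qed

end




context wn begin

definition ext :: "nat set \<Rightarrow> real vec \<Rightarrow> real \<Rightarrow> real vec" where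
  "ext K v \<delta> = vec n (\<lambda>j. if j \<in> K then v $ (card {a\<in>K. a<j}) else \<delta>)"

lemma ext_pick:
  assumes K: "K \<in> M_set B" and c: "c<m"
  shows "ext K v \<delta> $ (pick K c) = v $ c"
proof -
  note D = M_setD[OF K]
  have p: "pick K c \<in> K" "pick K c < n" using sig_props(1)[OF K c] by auto
  have "card {a\<in>K. a < pick K c} = c" using card_pick_le[of c K] c D(2) by simp
  thus ?thesis unfolding ext_def using p by simp
qed

lemma ext_out:
  assumes "j<n" "j \<notin> K"
  shows "ext K v \<delta> $ j = \<delta>"
  unfolding ext_def using assms by simp

lemma ext_sum:
  assumes K: "K \<in> M_set B" and X: "X \<in> carrier_mat m n" and i: "i<m"
  shows "(X *\<^sub>v ext K v \<delta>)$i = (\<Sum>c<m. X$$(i,pick K c) * v$c) + \<delta> * (\<Sum>j\<in>{..<n}-K. X$$(i,j))"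
proof -
  note D = M_setD[OF K]
  have bij: "bij_betw (pick K) {..<m} K" by (rule pick_bij[OF D(3,2)])
  have "(X *\<^sub>v ext K v \<delta>)$i = (\<Sum>j<n. X$$(i,j) * ext K v \<delta> $ j)"
    by (rule mv_index[OF X _ i]) (simp add: ext_def)
  also have "\<dots> = (\<Sum>j\<in>K. X$$(i,j) * ext K v \<delta> $ j) + (\<Sum>j\<in>{..<n}-K. X$$(i,j) * ext K v \<delta> $ j)"
    using sum.subset_diff[of K "{..<n}" "\<lambda>j. X$$(i,j) * ext K v \<delta> $ j"] D(1) by simp
  also have "(\<Sum>j\<in>K. X$$(i,j) * ext K v \<delta> $ j) = (\<Sum>c<m. X$$(i,pick K c) * ext K v \<delta> $ (pick K c))"
    using sum.reindex_bij_betw[OF bij, of "\<lambda>j. X$$(i,j) * ext K v \<delta> $ j"] by simp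
  also have "\<dots> = (\<Sum>c<m. X$$(i,pick K c) * v$c)"
    using ext_pick[OF K] by (intro sum.cong) auto
  also have "(\<Sum>j\<in>{..<n}-K. X$$(i,j) * ext K v \<delta> $ j) = (\<Sum>j\<in>{..<n}-K. X$$(i,j) * \<delta>)"
    using ext_out by (intro sum.cong) auto
  also have "\<dots> = \<delta> * (\<Sum>j\<in>{..<n}-K. X$$(i,j))" by (simp add: sum_distrib_left ac_simps)
  finally show ?thesis .
qed

lemma B_sum:
  assumes K: "K \<in> M_set B" and i: "i<m"
  shows "(\<Sum>c<m. B$$(i,pick K c) * v$c) = B$$(i, pick K (sinv K i)) * v$(sinv K i)"
proof -
  have s: "sinv K i < m" "sig K (sinv K i) = i" using sig_props(3)[OF K i] by auto
  have "(\<Sum>c<m. B$$(i,pick K c) * v$c) = (\<Sum>c<m. if c = sinv K i then B$$(i,pick K c) * v$c else 0)"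
  proof (rule sum.cong[OF refl])
    fix c assume "c \<in> {..<m}"
    hence c: "c<m" by simp
    show "B$$(i,pick K c) * v$c = (if c = sinv K i then B$$(i,pick K c) * v$c else 0)"
    proof (cases "c = sinv K i")
      case False
      hence "i \<noteq> sig K c" using sig_props(4)[OF K c] by auto
      thus ?thesis using BK_entry(2)[OF K i c] False by simp
    qed simp
  qed
  also have "\<dots> = B$$(i, pick K (sinv K i)) * v$(sinv K i)" using s by (simp add: sum.delta)
  finally show ?thesis .
qed

lemma A_sum:
  assumes K: "K \<in> M_set B" and i: "i<m" and v: "v \<in> carrier_vec m"
  shows "(\<Sum>b<m. A$$(i,pick K b) * v$b) = B$$(i, pick K (sinv K i)) * (C_K A B K *\<^sub>v v)$(sinv K i)"
proof -
  define c where "c = sinv K i"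
  have s: "c < m" "sig K c = i" using sig_props(3)[OF K i] unfolding c_def by auto
  have Bp: "B$$(i, pick K c) > 0" using BK_entry(3)[OF K i s(1)] s by simp
  have "(C_K A B K *\<^sub>v v)$c = (\<Sum>b<m. C_K A B K $$ (c,b) * v$b)"
    using mv_index[OF CK_car[OF K] _ s(1)] v by simp
  also have "\<dots> = (\<Sum>b<m. A$$(i,pick K b) * v$b) / B$$(i, pick K c)"
    using CK_entry[OF K s(1)] s by (simp add: sum_divide_distrib)
  finally show ?thesis unfolding c_def[symmetric] using Bp by simp
qed

lemma ext_pos:
  assumes K: "K \<in> M_set B" and v: "v \<in> carrier_vec m" "\<forall>c<m. v$c > 0" and d: "\<delta> > 0"
  shows "pos_vec (ext K v \<delta>)" "dim_vec (ext K v \<delta>) = n"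
proof -
  note D = M_setD[OF K]
  show "dim_vec (ext K v \<delta>) = n" unfolding ext_def by simp
  have "ext K v \<delta> $ j > 0" if j: "j<n" for j
  proof (cases "j \<in> K")
    case True
    have "{a\<in>K. a < j} \<subset> K" using True by blast
    hence "card {a\<in>K. a < j} < m" using psubset_card_mono[OF D(3)] D(2) by simp
    thus ?thesis unfolding ext_def using True j v by simp
  next
    case False thus ?thesis using ext_out[OF j False] d by simp
  qed
  thus "pos_vec (ext K v \<delta>)" unfolding pos_vec_def ext_def by simp
qed

lemma ratio_le:
  assumes "b > 0" "a \<le> c * b"
  shows "ratio_e a b \<le> ereal c"
  unfolding ratio_e_def using assms by (simp add: pos_divide_le_eq)

lemma ext_ratio:
  assumes K: "K \<in> M_set B" and v: "v \<in> carrier_vec m" "\<forall>c<m. v$c > 0"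
    and le: "\<forall>c<m. (C_K A B K *\<^sub>v v)$c \<le> s * v$c" and s: "s \<ge> 0" and eta: "\<eta> > 0"
  shows "\<exists>\<delta>0>0. \<forall>\<delta>. 0 < \<delta> \<longrightarrow> \<delta> \<le> \<delta>0 \<longrightarrow> r_AB A B (ext K v \<delta>) \<le> ereal (s + \<eta>)"
proof -
  define \<beta> where "\<beta> i = B$$(i, pick K (sinv K i)) * v$(sinv K i)" for i
  have bpos: "\<beta> i > 0" if i: "i<m" for i
  proof -
    have s: "sinv K i < m" "sig K (sinv K i) = i" using sig_props(3)[OF K i] by auto
    show ?thesis unfolding \<beta>_def using BK_entry(3)[OF K i s(1)] s v by simp
  qed
  define \<beta>m where "\<beta>m = Min (\<beta> ` {..<m})"
  have fin: "finite (\<beta> ` {..<m})" "\<beta> ` {..<m} \<noteq> {}" using m_pos by auto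
  have bm: "\<beta>m > 0" unfolding \<beta>m_def using Min_in[OF fin] bpos by auto
  have bmle: "\<beta>m \<le> \<beta> i" if "i<m" for i unfolding \<beta>m_def using Min_le[OF fin(1)] that by simp
  define SA where "SA = (\<Sum>i<m. \<Sum>j<n. A$$(i,j))"
  have SA0: "SA \<ge> 0" unfolding SA_def using A_nn by (intro sum_nonneg) auto
  have RA: "(\<Sum>j\<in>{..<n}-K. A$$(i,j)) \<le> SA" "(\<Sum>j\<in>{..<n}-K. A$$(i,j)) \<ge> 0" if i: "i<m" for i
  proof -
    have "(\<Sum>j\<in>{..<n}-K. A$$(i,j)) \<le> (\<Sum>j<n. A$$(i,j))"
      using A_nn[OF i] by (intro sum_mono2) auto
    also have "\<dots> \<le> SA" unfolding SA_def
      using A_nn i by (intro member_le_sum[of i "{..<m}" "\<lambda>i. \<Sum>j<n. A$$(i,j)"] sum_nonneg) auto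
    finally show "(\<Sum>j\<in>{..<n}-K. A$$(i,j)) \<le> SA" .
    show "(\<Sum>j\<in>{..<n}-K. A$$(i,j)) \<ge> 0" using A_nn[OF i] by (intro sum_nonneg) auto
  qed
  have RB: "(\<Sum>j\<in>{..<n}-K. B$$(i,j)) \<ge> 0" if i: "i<m" for i
    using B_nn[OF i] by (intro sum_nonneg) auto
  define \<delta>0 where "\<delta>0 = \<eta> * \<beta>m / (SA + 1)"
  have d0: "\<delta>0 > 0" unfolding \<delta>0_def using eta bm SA0 by simp
  show ?thesis
  proof (intro exI[of _ \<delta>0] conjI d0 allI impI)
    fix \<delta> assume d: "0 < \<delta>" "\<delta> \<le> \<delta>0"
    let ?x = "ext K v \<delta>"
    have "ratio_e ((A *\<^sub>v ?x) $ i) ((B *\<^sub>v ?x) $ i) \<le> ereal (s + \<eta>)" if i: "i<m" for i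
    proof (rule ratio_le)
      have Bx: "(B *\<^sub>v ?x)$i = \<beta> i + \<delta> * (\<Sum>j\<in>{..<n}-K. B$$(i,j))"
        using ext_sum[OF K B_car i] B_sum[OF K i] unfolding \<beta>_def by simp
      have Bge: "(B *\<^sub>v ?x)$i \<ge> \<beta> i" unfolding Bx using d RB[OF i] by simp
      thus "(B *\<^sub>v ?x)$i > 0" using bpos[OF i] by simp
      have Ax: "(A *\<^sub>v ?x)$i = B$$(i, pick K (sinv K i)) * (C_K A B K *\<^sub>v v)$(sinv K i)
                 + \<delta> * (\<Sum>j\<in>{..<n}-K. A$$(i,j))"
        using ext_sum[OF K A_car i] A_sum[OF K i v(1)] by simp
      have si: "sinv K i < m" using sig_props(3)[OF K i] by auto
      have Bp: "B$$(i, pick K (sinv K i)) \<ge> 0"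
        using BK_entry(3)[OF K i si] sig_props(3)[OF K i] by (simp add: less_imp_le)
      have t1: "B$$(i, pick K (sinv K i)) * (C_K A B K *\<^sub>v v)$(sinv K i) \<le> s * \<beta> i"
        unfolding \<beta>_def using mult_left_mono[OF le[rule_format, OF si] Bp] by (simp add: ac_simps)
      have "\<delta> * (\<Sum>j\<in>{..<n}-K. A$$(i,j)) \<le> \<delta>0 * SA"
        using RA[OF i] d by (intro mult_mono) auto
      also have "\<delta>0 * SA \<le> \<eta> * \<beta>m"
      proof -
        have "\<delta>0 * SA = \<eta> * \<beta>m * (SA / (SA + 1))" unfolding \<delta>0_def by simp
        also have "\<dots> \<le> \<eta> * \<beta>m * 1" using SA0 eta bm by (intro mult_left_mono) auto
        finally show ?thesis by simp
      qed
      also have "\<dots> \<le> \<eta> * (B *\<^sub>v ?x)$i" using bmle[OF i] Bge eta by simp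
      finally have t2: "\<delta> * (\<Sum>j\<in>{..<n}-K. A$$(i,j)) \<le> \<eta> * (B *\<^sub>v ?x)$i" .
      have "s * \<beta> i \<le> s * (B *\<^sub>v ?x)$i" using Bge s by (rule mult_left_mono)
      thus "(A *\<^sub>v ?x)$i \<le> (s + \<eta>) * (B *\<^sub>v ?x)$i" unfolding Ax using t1 t2 by (simp add: algebra_simps)
    qed
    thus "r_AB A B ?x \<le> ereal (s + \<eta>)" unfolding r_AB_def using A_car by (intro SUP_least) auto
  qed
qed

end




context wn begin

lemma sum_over_sig:
  assumes K: "K \<in> M_set B"
  shows "(\<Sum>c<m. f (sig K c)) = (\<Sum>i<m. f i)"
proof (rule sum.reindex_bij_witness[of _ "sinv K" "sig K"])
  fix c assume "c \<in> {..<m}" thus "sinv K (sig K c) = c" "sig K c \<in> {..<m}"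
    using sig_props(1,4)[OF K] by auto
next
  fix i assume "i \<in> {..<m}" thus "sig K (sinv K i) = i" "sinv K i \<in> {..<m}"
    using sig_props(3)[OF K] by auto
qed simp

lemma lower_bound:
  assumes x: "dim_vec x = n" "\<forall>j<n. x$j > 0"
    and le: "\<forall>i<m. (A *\<^sub>v x)$i \<le> t * (B *\<^sub>v x)$i" and t: "t \<ge> 0" "t < t'"
  shows "\<exists>K\<in>M_set B. spec_rad (C_K A B K) \<le> t'"
proof -
  define u where "u = B *\<^sub>v x"
  have uc: "u \<in> carrier_vec m" unfolding u_def by (rule mult_mat_vec_carrier[OF B_car carrier_vecI[OF x(1)]])
  have ui: "u$l = (\<Sum>j<n. B$$(l,j) * x$j)" if "l<m" for l
    unfolding u_def by (rule mv_index[OF B_car x(1) that])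
  define S where "S l = {j \<in> {..<n}. h j = l}" for l
  have finS: "finite (S l)" for l unfolding S_def by simp
  have sumS: "(\<Sum>j\<in>S l. f j) = (\<Sum>j<n. if h j = l then f j else 0)" for l and f :: "nat \<Rightarrow> real"
    unfolding S_def by (rule sum.inter_filter) simp
  have uS: "u$l = (\<Sum>j\<in>S l. B$$(l,j) * x$j)" if l: "l<m" for l
  proof -
    have "u$l = (\<Sum>j<n. if h j = l then B$$(l,j) * x$j else 0)"
      unfolding ui[OF l]
    proof (rule sum.cong[OF refl])
      fix j assume "j \<in> {..<n}"
      hence j: "j<n" by simp
      show "B$$(l,j) * x$j = (if h j = l then B$$(l,j) * x$j else 0)"
      proof (cases "h j = l")
        case False
        hence "l \<noteq> h j" by simp
        thus ?thesis using B_zero[OF j l] False by simp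
      qed simp
    qed
    thus ?thesis unfolding sumS .
  qed
  have upos: "u$l > 0" if l: "l<m" for l
  proof -
    obtain j0 where j0: "j0<n" "h j0 = l" using row_exists[OF l] by blast
    have "B$$(l,j0) * x$j0 > 0" using h_prop[OF j0(1)] j0 x by simp
    also have "B$$(l,j0) * x$j0 \<le> (\<Sum>j<n. B$$(l,j) * x$j)"
      using j0 B_nn[OF l] x by (intro member_le_sum) (auto intro: less_imp_le)
    finally show ?thesis unfolding ui[OF l] .
  qed
  define G where "G = mat m m (\<lambda>(i,l). (\<Sum>j\<in>S l. A$$(i,j) * x$j) / u$l)"
  have Gc: "G \<in> carrier_mat m m" unfolding G_def by simp
  have Gnn: "\<forall>i<m. \<forall>l<m. G$$(i,l) \<ge> 0"
  proof (intro allI impI)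
    fix i l assume il: "i<m" "l<m"
    have "(\<Sum>j\<in>S l. A$$(i,j) * x$j) \<ge> 0"
    proof (rule sum_nonneg)
      fix j assume "j \<in> S l"
      hence j: "j<n" unfolding S_def by simp
      have "x$j > 0" using x j by simp
      thus "A$$(i,j) * x$j \<ge> 0" using A_nn[OF il(1) j] by (simp add: less_imp_le)
    qed
    thus "G$$(i,l) \<ge> 0" unfolding G_def using il upos[OF il(2)] by simp
  qed
  have swap: "(\<Sum>l<m. \<Sum>j\<in>S l. f j) = (\<Sum>j<n. f j)" for f :: "nat \<Rightarrow> real"
  proof -
    have "(\<Sum>l<m. \<Sum>j\<in>S l. f j) = (\<Sum>l<m. \<Sum>j<n. if h j = l then f j else 0)" unfolding sumS ..
    also have "\<dots> = (\<Sum>j<n. \<Sum>l<m. if h j = l then f j else 0)" by (rule sum.swap)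
    also have "\<dots> = (\<Sum>j<n. f j)" using h_prop by (intro sum.cong) (auto simp: sum.delta)
    finally show ?thesis .
  qed
  have Gu: "(G *\<^sub>v u)$i \<le> t * u$i" if i: "i<m" for i
  proof -
    have "(G *\<^sub>v u)$i = (\<Sum>l<m. G$$(i,l) * u$l)" using mv_index[OF Gc _ i] uc by simp
    also have "\<dots> = (\<Sum>l<m. \<Sum>j\<in>S l. A$$(i,j) * x$j)"
    proof (rule sum.cong[OF refl])
      fix l assume "l \<in> {..<m}"
      hence l: "l<m" by simp
      have "u$l > 0" by (rule upos[OF l])
      thus "G$$(i,l) * u$l = (\<Sum>j\<in>S l. A$$(i,j) * x$j)" unfolding G_def using i l by simp
    qed
    also have "\<dots> = (\<Sum>j<n. A$$(i,j) * x$j)" by (rule swap)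
    also have "\<dots> = (A *\<^sub>v x)$i" using mv_index[OF A_car x(1) i] by simp
    also have "\<dots> \<le> t * u$i" using le i unfolding u_def by simp
    finally show ?thesis .
  qed
  have "spec_rad G \<le> t" by (rule cw_upper[OF Gc m_pos Gnn uc]) (use upos Gu in auto)
  define GT where "GT = transpose_mat G"
  have GTc: "GT \<in> carrier_mat m m" unfolding GT_def using Gc by simp
  have GTnn: "\<forall>i<m. \<forall>l<m. GT$$(i,l) \<ge> 0" unfolding GT_def using Gnn Gc by simp
  have "spec_rad GT < t'" unfolding GT_def spec_rad_transpose[OF Gc] using \<open>spec_rad G \<le> t\<close> t by simp
  then obtain p where pc: "p \<in> carrier_vec m" and ppos: "\<forall>i<m. p$i > 0"
    and pGT: "\<forall>i<m. (GT *\<^sub>v p)$i = t' * p$i - 1"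
    using resolvent[OF GTc m_pos GTnn] by blast
  define \<phi> where "\<phi> j = (\<Sum>i<m. p$i * A$$(i,j))" for j
  have phinn: "\<phi> j \<ge> 0" if "j<n" for j unfolding \<phi>_def using ppos A_nn that
    by (intro sum_nonneg mult_nonneg_nonneg) (auto intro: less_imp_le)
  have keyS: "(\<Sum>j\<in>S l. \<phi> j * x$j) \<le> t' * p$l * u$l" if l: "l<m" for l
  proof -
    have "(GT *\<^sub>v p)$l = (\<Sum>i<m. G$$(i,l) * p$i)"
      using mv_index[OF GTc _ l] pc Gc l unfolding GT_def by simp
    also have "\<dots> = (\<Sum>i<m. p$i * (\<Sum>j\<in>S l. A$$(i,j) * x$j) / u$l)"
    proof (rule sum.cong[OF refl])
      fix i assume "i \<in> {..<m}"
      hence i: "i<m" by simp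
      show "G$$(i,l) * p$i = p$i * (\<Sum>j\<in>S l. A$$(i,j) * x$j) / u$l" unfolding G_def using i l by simp
    qed
    also have "\<dots> = (\<Sum>i<m. p$i * (\<Sum>j\<in>S l. A$$(i,j) * x$j)) / u$l"
      by (rule sum_divide_distrib[symmetric])
    also have "(\<Sum>i<m. p$i * (\<Sum>j\<in>S l. A$$(i,j) * x$j)) = (\<Sum>i<m. \<Sum>j\<in>S l. p$i * A$$(i,j) * x$j)"
      by (simp add: sum_distrib_left mult.assoc)
    also have "\<dots> = (\<Sum>j\<in>S l. \<Sum>i<m. p$i * A$$(i,j) * x$j)" by (rule sum.swap)
    also have "\<dots> = (\<Sum>j\<in>S l. \<phi> j * x$j)" unfolding \<phi>_def by (simp add: sum_distrib_right)
    finally have "(\<Sum>j\<in>S l. \<phi> j * x$j) / u$l \<le> t' * p$l" using pGT l by simp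
    thus ?thesis using upos[OF l] by (simp add: pos_divide_le_eq ac_simps)
  qed
  define g where "g l j = \<phi> j / B$$(l,j)" for l j
  define \<mu> where "\<mu> l = Min (g l ` S l)" for l
  have Sne: "S l \<noteq> {}" if "l<m" for l using row_exists[OF that] unfolding S_def by auto
  have ex: "\<exists>j. j \<in> S l \<and> g l j = \<mu> l" if "l<m" for l
    using Min_in[of "g l ` S l"] finS Sne[OF that] unfolding \<mu>_def by fastforce
  define k where "k l = (SOME j. j \<in> S l \<and> g l j = \<mu> l)" for l
  have k: "k l \<in> S l \<and> g l (k l) = \<mu> l" if "l<m" for l
    unfolding k_def by (rule someI_ex[OF ex[OF that]])
  have kS: "k l < n \<and> h (k l) = l" if "l<m" for l using k[OF that] unfolding S_def by auto
  have phik: "\<phi> (k l) \<le> t' * p$l * B$$(l, k l)" if l: "l<m" for l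
  proof -
    have Bk: "B$$(l, k l) > 0" using h_prop[of "k l"] kS[OF l] by auto
    have "\<mu> l * u$l = (\<Sum>j\<in>S l. \<mu> l * (B$$(l,j) * x$j))" unfolding uS[OF l] by (simp add: sum_distrib_left)
    also have "\<dots> \<le> (\<Sum>j\<in>S l. g l j * (B$$(l,j) * x$j))"
    proof (rule sum_mono)
      fix j assume j: "j \<in> S l"
      have jn: "j<n" "h j = l" using j unfolding S_def by auto
      have "\<mu> l \<le> g l j" unfolding \<mu>_def using Min_le finS j by auto
      moreover have "B$$(l,j) * x$j \<ge> 0" using h_prop[OF jn(1)] jn x by (simp add: less_imp_le)
      ultimately show "\<mu> l * (B$$(l,j) * x$j) \<le> g l j * (B$$(l,j) * x$j)" by (rule mult_right_mono)
    qed
    also have "\<dots> = (\<Sum>j\<in>S l. \<phi> j * x$j)"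
    proof (rule sum.cong[OF refl])
      fix j assume j: "j \<in> S l"
      have jn: "j<n" "h j = l" using j unfolding S_def by auto
      have "B$$(l,j) > 0" using h_prop[OF jn(1)] jn by simp
      thus "g l j * (B$$(l,j) * x$j) = \<phi> j * x$j" unfolding g_def by simp
    qed
    also have "\<dots> \<le> t' * p$l * u$l" by (rule keyS[OF l])
    finally have "\<mu> l \<le> t' * p$l" using upos[OF l] by (simp add: mult_le_cancel_right_pos)
    hence "g l (k l) \<le> t' * p$l" using k[OF l] by simp
    thus ?thesis unfolding g_def using Bk by (simp add: pos_divide_le_eq)
  qed
  define K where "K = k ` {..<m}"
  have K: "K \<in> M_set B" unfolding K_def by (rule choice_in_M) (use kS in blast)
  have pk: "pick K b = k (sig K b)" if b: "b<m" for b
  proof -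
    have "pick K b \<in> K" using sig_props(1)[OF K b] by blast
    then obtain l where l: "l<m" "pick K b = k l" unfolding K_def by blast
    hence "sig K b = l" unfolding sig_def using kS[OF l(1)] by simp
    thus ?thesis using l by simp
  qed
  define CT where "CT = transpose_mat (C_K A B K)"
  have CTc: "CT \<in> carrier_mat m m" unfolding CT_def using CK_car[OF K] by simp
  have CTnn: "\<forall>i<m. \<forall>l<m. CT$$(i,l) \<ge> 0" unfolding CT_def using CK_nn[OF K] CK_car[OF K] by simp
  define q where "q = vec m (\<lambda>c. p$(sig K c) * B$$(sig K c, pick K c))"
  have qc: "q \<in> carrier_vec m" unfolding q_def by simp
  have qpos: "\<forall>c<m. q$c > 0"
  proof (intro allI impI)
    fix c assume c: "c<m"
    have s: "sig K c < m" using sig_props(1)[OF K c] by blast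
    show "q$c > 0" unfolding q_def using c ppos s BK_entry(3)[OF K s c] by simp
  qed
  have "(CT *\<^sub>v q)$b \<le> t' * q$b" if b: "b<m" for b
  proof -
    have sb: "sig K b < m" using sig_props(1)[OF K b] by blast
    have "(CT *\<^sub>v q)$b = (\<Sum>c<m. C_K A B K $$ (c,b) * q$c)"
      using mv_index[OF CTc _ b] qc CK_car[OF K] b unfolding CT_def by simp
    also have "\<dots> = (\<Sum>c<m. A$$(sig K c, pick K b) * p$(sig K c))"
    proof (rule sum.cong[OF refl])
      fix c assume "c \<in> {..<m}"
      hence c: "c<m" by simp
      have s: "sig K c < m" using sig_props(1)[OF K c] by blast
      have "B$$(sig K c, pick K c) > 0" using BK_entry(3)[OF K s c] .
      thus "C_K A B K $$ (c,b) * q$c = A$$(sig K c, pick K b) * p$(sig K c)"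
        unfolding CK_entry[OF K c b] q_def using c by simp
    qed
    also have "\<dots> = (\<Sum>i<m. A$$(i, pick K b) * p$i)" by (rule sum_over_sig[OF K])
    also have "\<dots> = \<phi> (k (sig K b))" unfolding \<phi>_def pk[OF b] by (simp add: ac_simps)
    also have "\<dots> \<le> t' * p$(sig K b) * B$$(sig K b, k (sig K b))" by (rule phik[OF sb])
    also have "\<dots> = t' * q$b" unfolding q_def using b pk[OF b] by simp
    finally show ?thesis .
  qed
  hence "spec_rad CT \<le> t'" using cw_upper[OF CTc m_pos CTnn qc] qpos by blast
  hence "spec_rad (C_K A B K) \<le> t'" unfolding CT_def spec_rad_transpose[OF CK_car[OF K]] .
  thus ?thesis using K by blast
qed

end




context wn begin

definition rstar where "rstar = Min (spec_rad ` C_K A B ` M_set B)"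

lemma rstar_props:
  "finite (spec_rad ` C_K A B ` M_set B)" "spec_rad ` C_K A B ` M_set B \<noteq> {}"
  "\<And>K. K \<in> M_set B \<Longrightarrow> rstar \<le> spec_rad (C_K A B K)"
  "\<exists>K\<in>M_set B. spec_rad (C_K A B K) = rstar"
proof -
  show f: "finite (spec_rad ` C_K A B ` M_set B)" using M_set_finite by simp
  show ne: "spec_rad ` C_K A B ` M_set B \<noteq> {}" using M_set_nonempty by simp
  show "\<And>K. K \<in> M_set B \<Longrightarrow> rstar \<le> spec_rad (C_K A B K)"
    unfolding rstar_def using Min_le[OF f] by simp
  have "rstar \<in> spec_rad ` C_K A B ` M_set B" unfolding rstar_def by (rule Min_in[OF f ne])
  thus "\<exists>K\<in>M_set B. spec_rad (C_K A B K) = rstar" by auto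
qed

lemma rstar_nonneg: "rstar \<ge> 0"
  using rstar_props(4) spec_rad_nonneg[OF CK_car m_pos] by metis

lemma r_ge_rho: "dim_vec x = n \<Longrightarrow> pos_vec x \<Longrightarrow> rho_AB A B \<le> r_AB A B x"
  unfolding rho_AB_def using A_car by (intro INF_lower) auto

lemma rho_le_K:
  assumes K: "K \<in> M_set B"
  shows "rho_AB A B \<le> ereal (spec_rad (C_K A B K))"
proof (rule ereal_le_epsilon2)
  fix e :: real assume e: "0 < e"
  let ?C = "C_K A B K"
  have Cc: "?C \<in> carrier_mat m m" by (rule CK_car[OF K])
  define t where "t = spec_rad ?C + e/2"
  have tgt: "spec_rad ?C < t" and t0: "t \<ge> 0" unfolding t_def using e spec_rad_nonneg[OF Cc m_pos] by auto
  obtain z where z: "z \<in> carrier_vec m" "\<forall>i<m. z$i > 0" "\<forall>i<m. (?C *\<^sub>v z)$i = t * z$i - 1"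
    using resolvent[OF Cc m_pos CK_nn[OF K]] tgt by blast
  have zle: "\<forall>i<m. (?C *\<^sub>v z)$i \<le> t * z$i" using z(3) by simp
  obtain \<delta>0 where d0: "\<delta>0 > 0" "\<forall>\<delta>. 0 < \<delta> \<longrightarrow> \<delta> \<le> \<delta>0 \<longrightarrow> r_AB A B (ext K z \<delta>) \<le> ereal (t + e/2)"
    using ext_ratio[OF K z(1,2) zle t0, of "e/2"] e by auto
  have "rho_AB A B \<le> r_AB A B (ext K z \<delta>0)"
    using ext_pos[OF K z(1,2) d0(1)] by (intro r_ge_rho) auto
  also have "\<dots> \<le> ereal (t + e/2)" using d0 by auto
  also have "t + e/2 = spec_rad ?C + e" unfolding t_def by simp
  finally show "rho_AB A B \<le> ereal (spec_rad ?C) + ereal e" by simp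
qed

lemma Bx_pos:
  assumes x: "dim_vec x = n" "\<forall>j<n. x$j > 0" and i: "i<m"
  shows "(B *\<^sub>v x)$i > 0"
proof -
  obtain j0 where j0: "j0<n" "h j0 = i" using row_exists[OF i] by blast
  have "B$$(i,j0) * x$j0 > 0" using h_prop[OF j0(1)] j0 x by simp
  also have "B$$(i,j0) * x$j0 \<le> (\<Sum>j<n. B$$(i,j) * x$j)"
  proof (rule member_le_sum)
    fix j assume "j \<in> {..<n} - {j0}"
    hence j: "j<n" by simp
    have "x$j > 0" using x j by simp
    thus "B$$(i,j) * x$j \<ge> 0" using B_nn[OF i j] by (simp add: less_imp_le)
  qed (use j0 in auto)
  also have "\<dots> = (B *\<^sub>v x)$i" using mv_index[OF B_car x(1) i] by simp
  finally show ?thesis .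
qed

lemma Ax_nn:
  assumes x: "dim_vec x = n" "\<forall>j<n. x$j \<ge> 0" and i: "i<m"
  shows "(A *\<^sub>v x)$i \<ge> 0"
proof -
  have "(A *\<^sub>v x)$i = (\<Sum>j<n. A$$(i,j) * x$j)" using mv_index[OF A_car x(1) i] by simp
  also have "\<dots> \<ge> 0"
  proof (rule sum_nonneg)
    fix j assume "j \<in> {..<n}"
    hence j: "j<n" by simp
    show "A$$(i,j) * x$j \<ge> 0" using A_nn[OF i j] x j by simp
  qed
  finally show ?thesis .
qed

lemma rho_ge_min: "ereal rstar \<le> rho_AB A B"
  unfolding rho_AB_def
proof (rule INF_greatest)
  fix x assume "x \<in> {x. dim_vec x = dim_col A \<and> pos_vec x}"
  hence x: "dim_vec x = n" "\<forall>j<n. x$j > 0" using A_car unfolding pos_vec_def by auto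
  have xnn: "\<forall>j<n. x$j \<ge> 0" using x(2) by (simp add: less_imp_le)
  have rat: "ratio_e ((A *\<^sub>v x)$i) ((B *\<^sub>v x)$i) = ereal ((A *\<^sub>v x)$i / (B *\<^sub>v x)$i)" if "i<m" for i
    using Bx_pos[OF x that] unfolding ratio_e_def by simp
  have rle: "ratio_e ((A *\<^sub>v x)$i) ((B *\<^sub>v x)$i) \<le> r_AB A B x" if "i<m" for i
    unfolding r_AB_def using A_car that by (intro SUP_upper) auto
  show "ereal rstar \<le> r_AB A B x"
  proof (rule ccontr)
    assume "\<not> ereal rstar \<le> r_AB A B x"
    hence lt: "r_AB A B x < ereal rstar" by simp
    have "ratio_e ((A *\<^sub>v x)$0) ((B *\<^sub>v x)$0) \<ge> 0"
      unfolding rat[OF m_pos] using Ax_nn[OF x(1) xnn m_pos] Bx_pos[OF x m_pos] by simp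
    hence r0: "r_AB A B x \<ge> 0" using rle[OF m_pos] by simp
    then obtain t where t: "r_AB A B x = ereal t" using lt by (cases "r_AB A B x") auto
    have t0: "t \<ge> 0" using r0 t by simp
    have tl: "t < rstar" using lt t by simp
    have le: "\<forall>i<m. (A *\<^sub>v x)$i \<le> t * (B *\<^sub>v x)$i"
    proof (intro allI impI)
      fix i assume i: "i<m"
      have "(A *\<^sub>v x)$i / (B *\<^sub>v x)$i \<le> t" using rle[OF i] unfolding rat[OF i] t by simp
      thus "(A *\<^sub>v x)$i \<le> t * (B *\<^sub>v x)$i" using Bx_pos[OF x i] by (simp add: pos_divide_le_eq)
    qed
    obtain K where K: "K \<in> M_set B" "spec_rad (C_K A B K) \<le> (t + rstar)/2"
      using lower_bound[OF x le t0, of "(t + rstar)/2"] tl by auto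
    have "rstar \<le> (t + rstar)/2" using rstar_props(3)[OF K(1)] K(2) by simp
    thus False using tl by simp
  qed
qed

lemma rho_eq: "rho_AB A B = ereal rstar"
proof (rule antisym)
  obtain K where K: "K \<in> M_set B" "spec_rad (C_K A B K) = rstar" using rstar_props(4) by blast
  show "rho_AB A B \<le> ereal rstar" using rho_le_K[OF K(1)] K(2) by simp
  show "ereal rstar \<le> rho_AB A B" by (rule rho_ge_min)
qed

end




context wn begin

lemma in_K_pick:
  assumes K: "K \<in> M_set B" and j: "j \<in> K"
  shows "\<exists>c<m. j = pick K c"
proof -
  note D = M_setD[OF K]
  have "j \<in> pick K ` {..<m}" using bij_betw_imp_surj_on[OF pick_bij[OF D(3,2)]] j by simp
  thus ?thesis by auto
qed

lemma part2:
  assumes K: "K \<in> M_set B" and Kmin: "spec_rad (C_K A B K) = rstar"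
  shows "\<exists>y. prob_vec n y \<and> optimal A B y \<and> supp_vec y \<subseteq> K \<and> GPF_eigenvector A B y"
proof -
  note D = M_setD[OF K]
  let ?C = "C_K A B K"
  have Cc: "?C \<in> carrier_mat m m" by (rule CK_car[OF K])
  have Cnn: "\<forall>i<m. \<forall>j<m. ?C$$(i,j) \<ge> 0" by (rule CK_nn[OF K])
  obtain u t u0 where ut: "\<And>k. u k \<in> carrier_vec m" "\<And>k. \<forall>i<m. u k $ i > 0"
      "\<And>k. \<forall>i<m. (?C *\<^sub>v u k)$i \<le> t k * u k $ i"
    and tlim: "t \<longlonglongrightarrow> spec_rad ?C" and ulim: "\<forall>i<m. (\<lambda>k. u k $ i) \<longlonglongrightarrow> u0 $ i"
    and u0c: "u0 \<in> carrier_vec m" and u0nn: "\<forall>i<m. u0$i \<ge> 0" and u0s: "(\<Sum>i<m. u0$i) = 1"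
    and u0e: "?C *\<^sub>v u0 = spec_rad ?C \<cdot>\<^sub>v u0"
    using pf_seq[OF Cc m_pos Cnn] by blast
  define y where "y = ext K u0 0"
  have ydim: "dim_vec y = n" unfolding y_def ext_def by simp
  have ypick: "y $ pick K c = u0 $ c" if "c<m" for c unfolding y_def by (rule ext_pick[OF K that])
  have yout: "y $ j = 0" if "j<n" "j \<notin> K" for j unfolding y_def using ext_out[OF that] .
  have ynn: "\<forall>j<n. y$j \<ge> 0"
  proof (intro allI impI)
    fix j assume j: "j<n"
    show "y$j \<ge> 0"
    proof (cases "j \<in> K")
      case True
      then obtain c where c: "c<m" "j = pick K c" using in_K_pick[OF K] by blast
      show ?thesis using ypick[OF c(1)] u0nn c by simp
    qed (use yout j in simp)
  qed
  define X where "X = (mat m n (\<lambda>_. 1) :: real mat)"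
  have Xc: "X \<in> carrier_mat m n" unfolding X_def by simp
  have "(X *\<^sub>v y)$0 = (\<Sum>j<n. X$$(0,j) * y$j)" by (rule mv_index[OF Xc ydim m_pos])
  also have "\<dots> = (\<Sum>j<n. y$j)" unfolding X_def using m_pos by simp
  finally have s1: "(X *\<^sub>v y)$0 = (\<Sum>j<n. y$j)" .
  have "(X *\<^sub>v y)$0 = (\<Sum>c<m. X$$(0,pick K c) * u0$c) + 0 * (\<Sum>j\<in>{..<n}-K. X$$(0,j))"
    unfolding y_def by (rule ext_sum[OF K Xc m_pos])
  also have "\<dots> = (\<Sum>c<m. u0$c)" unfolding X_def using m_pos sig_props(1)[OF K] by simp
  finally have ysum: "(\<Sum>j<n. y$j) = 1" using s1 u0s by simp
  have ynz: "y \<noteq> 0\<^sub>v n" using ysum by auto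
  have prob: "prob_vec n y" unfolding prob_vec_def nonneg_vec_def using ydim ynn ysum by simp
  have supp: "supp_vec y \<subseteq> K" unfolding supp_vec_def using yout ydim by auto
  have rs: "spec_rad ?C = rstar" by (rule Kmin)
  have By: "(B *\<^sub>v y)$i = B$$(i, pick K (sinv K i)) * u0$(sinv K i)" if i: "i<m" for i
    using ext_sum[OF K B_car i, of u0 0] B_sum[OF K i, of u0] unfolding y_def by simp
  have Ay: "(A *\<^sub>v y)$i = rstar * (B *\<^sub>v y)$i" if i: "i<m" for i
  proof -
    have si: "sinv K i < m" using sig_props(3)[OF K i] by auto
    have "(A *\<^sub>v y)$i = B$$(i, pick K (sinv K i)) * (?C *\<^sub>v u0)$(sinv K i)"
      using ext_sum[OF K A_car i, of u0 0] A_sum[OF K i u0c] unfolding y_def by simp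
    also have "(?C *\<^sub>v u0)$(sinv K i) = rstar * u0$(sinv K i)" using u0e u0c si rs by simp
    finally show ?thesis using By[OF i] by simp
  qed
  have Aeq: "A *\<^sub>v y = rstar \<cdot>\<^sub>v (B *\<^sub>v y)"
    by (rule eq_vecI) (use Ay A_car B_car in auto)
  have gpf: "GPF_eigenvector A B y" unfolding GPF_eigenvector_def
    using ydim ynn ynz Aeq rho_eq A_car unfolding nonneg_vec_def by auto
  have Bynn: "(B *\<^sub>v y)$i \<ge> 0" if i: "i<m" for i
  proof -
    have si: "sinv K i < m" "sig K (sinv K i) = i" using sig_props(3)[OF K i] by auto
    show ?thesis unfolding By[OF i] using BK_entry(3)[OF K i si(1)] si u0nn by simp
  qed
  have rat_le: "ratio_e ((A *\<^sub>v y)$i) ((B *\<^sub>v y)$i) \<le> ereal rstar" if i: "i<m" for i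
    unfolding Ay[OF i] ratio_e_def using Bynn[OF i] rstar_nonneg by auto
  have "\<exists>c0<m. u0$c0 > 0"
  proof (rule ccontr)
    assume "\<not> (\<exists>c0<m. u0$c0 > 0)"
    hence "\<forall>c<m. u0$c \<le> 0" by (meson not_le)
    hence "(\<Sum>c<m. u0$c) \<le> 0" by (intro sum_nonpos) auto
    thus False using u0s by simp
  qed
  then obtain c0 where c0: "c0<m" "u0$c0 > 0" by blast
  define i0 where "i0 = sig K c0"
  have i0: "i0 < m" "sinv K i0 = c0" unfolding i0_def using sig_props(1,4)[OF K c0(1)] by auto
  have By0: "(B *\<^sub>v y)$i0 > 0" unfolding By[OF i0(1)] i0(2)
    using BK_entry(3)[OF K i0(1) c0(1)] c0 unfolding i0_def by simp
  have rat0: "ratio_e ((A *\<^sub>v y)$i0) ((B *\<^sub>v y)$i0) = ereal rstar"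
    unfolding Ay[OF i0(1)] ratio_e_def using By0 by simp
  have ry: "r_AB A B y = ereal rstar"
  proof (rule antisym)
    show "r_AB A B y \<le> ereal rstar" unfolding r_AB_def using A_car rat_le by (intro SUP_least) auto
    show "ereal rstar \<le> r_AB A B y" unfolding r_AB_def using A_car i0(1) rat0
      by (intro SUP_upper2[of i0]) auto
  qed
  have tk: "t k \<ge> rstar" for k
  proof -
    have "spec_rad ?C \<le> t k" using cw_upper[OF Cc m_pos Cnn ut(1)] ut(2,3) by blast
    thus ?thesis using rs by simp
  qed
  have tk0: "t k \<ge> 0" for k using tk[of k] rstar_nonneg by simp
  define \<eta> where "\<eta> k = inverse (real (Suc k))" for k
  have eta: "\<eta> k > 0" for k unfolding \<eta>_def by simp
  have exd: "\<exists>\<delta>0>0. \<forall>\<delta>. 0 < \<delta> \<longrightarrow> \<delta> \<le> \<delta>0 \<longrightarrow> r_AB A B (ext K (u k) \<delta>) \<le> ereal (t k + \<eta> k)" for k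
    by (rule ext_ratio[OF K ut(1) ut(2) ut(3) tk0 eta])
  define d0 where "d0 k = (SOME \<delta>0. \<delta>0 > 0 \<and> (\<forall>\<delta>. 0 < \<delta> \<longrightarrow> \<delta> \<le> \<delta>0 \<longrightarrow> r_AB A B (ext K (u k) \<delta>) \<le> ereal (t k + \<eta> k)))" for k
  have d0: "d0 k > 0 \<and> (\<forall>\<delta>. 0 < \<delta> \<longrightarrow> \<delta> \<le> d0 k \<longrightarrow> r_AB A B (ext K (u k) \<delta>) \<le> ereal (t k + \<eta> k))" for k
    unfolding d0_def by (rule someI_ex[OF exd])
  define dk where "dk k = min (d0 k) (\<eta> k)" for k
  have dk: "dk k > 0" "dk k \<le> d0 k" "dk k \<le> \<eta> k" for k unfolding dk_def using d0 eta by auto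
  define Y where "Y k = ext K (u k) (dk k)" for k
  have Ypos: "pos_vec (Y k)" "dim_vec (Y k) = n" for k
    unfolding Y_def using ext_pos[OF K ut(1) ut(2) dk(1)] by auto
  have Yup: "r_AB A B (Y k) \<le> ereal (t k + \<eta> k)" for k unfolding Y_def using d0[of k] dk[of k] by blast
  have Ylo: "ereal rstar \<le> r_AB A B (Y k)" for k using r_ge_rho[OF Ypos(2) Ypos(1)] rho_eq by simp
  have etalim: "\<eta> \<longlonglongrightarrow> 0" unfolding \<eta>_def by (rule LIMSEQ_inverse_real_of_nat)
  have "(\<lambda>k. t k + \<eta> k) \<longlonglongrightarrow> rstar + 0" using tlim rs etalim by (intro tendsto_add) auto
  hence uplim: "(\<lambda>k. ereal (t k + \<eta> k)) \<longlonglongrightarrow> ereal rstar" by simp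
  have rlim: "(\<lambda>k. r_AB A B (Y k)) \<longlonglongrightarrow> rho_AB A B" unfolding rho_eq
    by (rule tendsto_sandwich[OF _ _ tendsto_const uplim]) (use Ylo Yup in auto)
  have dklim: "dk \<longlonglongrightarrow> 0"
  proof (rule tendsto_sandwich[of "\<lambda>_. 0" _ _ \<eta>])
    have "\<And>k. 0 \<le> dk k" using dk(1) by (simp add: less_imp_le)
    thus "\<forall>\<^sub>F k in sequentially. 0 \<le> dk k" by simp
    show "\<forall>\<^sub>F k in sequentially. dk k \<le> \<eta> k" using dk(3) by simp
  qed (use etalim in auto)
  have Ylim: "(\<lambda>k. Y k $ j) \<longlonglongrightarrow> y $ j" if j: "j<n" for j
  proof (cases "j \<in> K")
    case True
    then obtain c where c: "c<m" "j = pick K c" using in_K_pick[OF K] by blast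
    have "Y k $ j = u k $ c" for k unfolding Y_def c(2) by (rule ext_pick[OF K c(1)])
    thus ?thesis using ulim c ypick[OF c(1)] by simp
  next
    case False
    have "Y k $ j = dk k" for k unfolding Y_def by (rule ext_out[OF j False])
    thus ?thesis using dklim yout[OF j False] by simp
  qed
  have opt: "optimal A B y" unfolding optimal_def
  proof (intro conjI)
    show "dim_vec y = dim_col A" using ydim A_car by simp
    show "nonneg_vec y" unfolding nonneg_vec_def using ydim ynn by simp
    show "y \<noteq> 0\<^sub>v (dim_col A)" using ynz A_car by simp
    show "r_AB A B y = rho_AB A B" using ry rho_eq by simp
    show "\<exists>Y. (\<forall>k. dim_vec (Y k) = dim_col A \<and> pos_vec (Y k)) \<and>
        (\<forall>i<dim_col A. (\<lambda>k. Y k $ i) \<longlonglongrightarrow> y $ i) \<and> (\<lambda>k. r_AB A B (Y k)) \<longlonglongrightarrow> rho_AB A B"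
      using Ypos Ylim rlim A_car by (intro exI[of _ Y]) auto
  qed
  show ?thesis using prob opt supp gpf by blast
qed

lemma cross_edge:
  assumes "(a,b) \<in> E\<^sup>*" "a \<notin> S" "b \<in> S"
  shows "\<exists>a' b'. (a',b') \<in> E \<and> a' \<notin> S \<and> b' \<in> S"
  using assms
proof (induction rule: rtrancl_induct)
  case base thus ?case by simp
next
  case (step y z)
  show ?case
  proof (cases "y \<in> S")
    case True thus ?thesis using step by blast
  next
    case False thus ?thesis using step by blast
  qed
qed

lemma part3:
  assumes irr: "S_irreducible A B" and K: "K \<in> M_set B"
    and y: "optimal A B y" and ysupp: "supp_vec y \<subseteq> K"
  shows "minimal_optimal A B y"
  unfolding minimal_optimal_def
proof (intro conjI y notI)
  assume "\<exists>z. optimal A B z \<and> supp_vec z \<subset> supp_vec y"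
  then obtain z where z: "optimal A B z" "supp_vec z \<subset> supp_vec y" by blast
  let ?C = "C_K A B K"
  have zd: "dim_vec z = n" and znn: "\<forall>j<n. z$j \<ge> 0" and znz: "z \<noteq> 0\<^sub>v n"
    and rz: "r_AB A B z = rho_AB A B"
    using z(1) A_car unfolding optimal_def nonneg_vec_def by auto
  have zK: "supp_vec z \<subseteq> K" using z(2) ysupp by blast
  have zneK: "supp_vec z \<noteq> K" using z(2) ysupp by blast
  define S where "S = {c. c<m \<and> z $ (pick K c) \<noteq> 0}"
  obtain j1 where j1: "j1<n" "z$j1 \<noteq> 0" using znz zd by (metis eq_vecI index_zero_vec(1,2))
  have "j1 \<in> K" using zK j1 zd unfolding supp_vec_def by auto
  then obtain c1 where c1: "c1<m" "j1 = pick K c1" using in_K_pick[OF K] by blast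
  have c1S: "c1 \<in> S" unfolding S_def using c1 j1 by simp
  obtain j0 where j0: "j0 \<in> K" "j0 \<notin> supp_vec z" using zK zneK by blast
  have j0n: "j0 < n" using j0 M_setD(1)[OF K] by auto
  then have zj0: "z$j0 = 0" using j0 zd unfolding supp_vec_def by auto
  obtain c0 where c0: "c0<m" "j0 = pick K c0" using in_K_pick[OF K j0(1)] by blast
  have c0S: "c0 \<notin> S" unfolding S_def using c0 zj0 by simp
  have Cc: "?C \<in> carrier_mat m m" by (rule CK_car[OF K])
  have "irreducible_mat ?C" using irr K unfolding S_irreducible_def by blast
  hence "(c0, c1) \<in> {(a, b). a < m \<and> b < m \<and> ?C $$ (a, b) > 0}\<^sup>*"
    unfolding irreducible_mat_def using Cc c0 c1 by auto
  then obtain a b where ab: "(a,b) \<in> {(a, b). a < m \<and> b < m \<and> ?C $$ (a, b) > 0}" "a \<notin> S" "b \<in> S"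
    using cross_edge[OF _ c0S c1S] by blast
  have a: "a<m" "?C $$ (a,b) > 0" and b: "b<m" using ab by auto
  have za: "z $ pick K a = 0" using ab(2) a unfolding S_def by simp
  have zb: "z $ pick K b > 0"
  proof -
    have "z $ pick K b \<noteq> 0" using ab(3) unfolding S_def by simp
    moreover have "pick K b < n" using sig_props(1)[OF K b] by blast
    ultimately show ?thesis using znn by force
  qed
  define i where "i = sig K a"
  have i: "i<m" unfolding i_def using sig_props(1)[OF K a(1)] by blast
  have Bp: "B $$ (i, pick K a) > 0" unfolding i_def using BK_entry(3)[OF K _ a(1)] sig_props(1)[OF K a(1)] by blast
  have Apos: "A $$ (i, pick K b) > 0"
    using a(2) CK_entry[OF K a(1) b] Bp unfolding i_def by (simp add: zero_less_divide_iff)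
  have Bz: "(B *\<^sub>v z)$i = 0"
  proof -
    have "(B *\<^sub>v z)$i = (\<Sum>j<n. B$$(i,j) * z$j)" by (rule mv_index[OF B_car zd i])
    also have "\<dots> = 0"
    proof (rule sum.neutral, rule ballI)
      fix j assume "j \<in> {..<n}"
      hence j: "j<n" by simp
      show "B$$(i,j) * z$j = 0"
      proof (cases "z$j = 0")
        case False
        hence "j \<in> K" using zK j zd unfolding supp_vec_def by auto
        then obtain c where c: "c<m" "j = pick K c" using in_K_pick[OF K] by blast
        have "B$$(i,j) = 0"
        proof (rule ccontr)
          assume "B$$(i,j) \<noteq> 0"
          hence "h j = i" using h_unique[OF j i] by simp
          hence "sig K c = sig K a" unfolding sig_def i_def c(2) by simp
          hence "c = a" using sig_props(2)[OF K c(1) a(1)] by simp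
          thus False using False za c by simp
        qed
        thus ?thesis by simp
      qed simp
    qed
    finally show ?thesis .
  qed
  have Az: "(A *\<^sub>v z)$i > 0"
  proof -
    have pb: "pick K b < n" using sig_props(1)[OF K b] by blast
    have "0 < A $$ (i, pick K b) * z $ pick K b" using Apos zb by simp
    also have "\<dots> \<le> (\<Sum>j<n. A$$(i,j) * z$j)"
    proof (rule member_le_sum)
      fix j assume "j \<in> {..<n} - {pick K b}"
      hence j: "j<n" by simp
      show "A$$(i,j) * z$j \<ge> 0" using A_nn[OF i j] znn j by simp
    qed (use pb in auto)
    also have "\<dots> = (A *\<^sub>v z)$i" using mv_index[OF A_car zd i] by simp
    finally show ?thesis .
  qed
  have "ratio_e ((A *\<^sub>v z)$i) ((B *\<^sub>v z)$i) = \<infinity>" unfolding ratio_e_def using Az Bz by simp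
  moreover have "ratio_e ((A *\<^sub>v z)$i) ((B *\<^sub>v z)$i) \<le> r_AB A B z"
    unfolding r_AB_def using A_car i by (intro SUP_upper) auto
  ultimately have "r_AB A B z = \<infinity>" by (simp add: top_ereal_def[symmetric] top_unique)
  thus False using rz rho_eq by simp
qed

end


theorem theorem6p5:
  fixes m n :: nat and A B :: "real mat"
  assumes m_pos: "0 < m"
    and WN: "WN_pair m n A B"
  shows "rho_AB A B = ereal (Min (spec_rad ` C_K A B ` M_set B)) \<and>
    (\<forall>K\<in>M_set B. spec_rad (C_K A B K) = Min (spec_rad ` C_K A B ` M_set B) \<longrightarrow>
       (\<exists>y. prob_vec n y \<and> optimal A B y \<and> supp_vec y \<subseteq> K \<and> GPF_eigenvector A B y)) \<and>
    (S_irreducible A B \<longrightarrow>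
       (\<forall>K\<in>M_set B. spec_rad (C_K A B K) = Min (spec_rad ` C_K A B ` M_set B) \<longrightarrow>
          (\<forall>y. prob_vec n y \<and> optimal A B y \<and> supp_vec y \<subseteq> K \<and> GPF_eigenvector A B y
               \<longrightarrow> minimal_optimal A B y)))"
proof -
  interpret wn m n A B by (rule wn.intro[OF m_pos WN])
  have r: "rho_AB A B = ereal (Min (spec_rad ` C_K A B ` M_set B))"
    using rho_eq unfolding rstar_def .
  have p2: "\<forall>K\<in>M_set B. spec_rad (C_K A B K) = Min (spec_rad ` C_K A B ` M_set B) \<longrightarrow>
       (\<exists>y. prob_vec n y \<and> optimal A B y \<and> supp_vec y \<subseteq> K \<and> GPF_eigenvector A B y)"
    using part2 unfolding rstar_def by blast
  have p3: "S_irreducible A B \<longrightarrow>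
       (\<forall>K\<in>M_set B. spec_rad (C_K A B K) = Min (spec_rad ` C_K A B ` M_set B) \<longrightarrow>
          (\<forall>y. prob_vec n y \<and> optimal A B y \<and> supp_vec y \<subseteq> K \<and> GPF_eigenvector A B y
               \<longrightarrow> minimal_optimal A B y))"
    using part3 by blast
  show ?thesis using r p2 p3 by blast
qed

end
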